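(* For a deformation tensor $\varphi$ with $|\varphi|<1$, the obstruction density $\mathcal O(\varphi)$ (computed with respect to $\theta$) equals $(1-|\varphi|^2)^{-9}$ times a polynomial (with constant coefficients, independent of $\varphi$) in $\varphi$, $\bar\varphi$ and their iterated $Z_1$, $Z_{\bar1}$ derivatives of order at most $6$, such that in each monomial the total number of derivatives falling on the factors is at most $6$.
   Context: Let $S^3=\{(z,w)\in\mathbb C^2:|z|^2+|w|^2=1\}$ with standard contact distribution $H$, standard contact form $\theta=-i(\bar z\,dz+\bar w\,dw)|_{TS^3}$, $Z_1=\bar w\,\partial_z-\bar z\,\partial_w$, $Z_{\bar1}=\overline{Z_1}$, Reeb field $T=i(z\partial_z+w\partial_w)-i(\bar z\partial_{\bar z}+\bar w\partial_{\bar w})$. Deformations: a deformation tensor is a smooth $\varphi:S^3\to\mathbb C$; if $|\varphi|<1$ it defines the CR structure on $(S^3,H)$ with $(1,0)$-bundle spanned by $\tilde Z_1=Z_1+\varphi Z_{\bar1}$. With fixed $\theta$ and coframe $(\theta,\tilde\theta^1,\tilde\theta^{\bar1})$ dual to $(T,\tilde Z_1,\tilde Z_{\bar1})$: $d\theta=i\tilde h_{1\bar1}\tilde\theta^1\wedge\tilde\theta^{\bar1}$, $\tilde h_{1\bar1}=1-|\varphi|^2$; Tanaka–Webster connection form $\tilde\omega_1{}^1$ and torsion $\tilde A_{\bar1}{}^1$ defined by $d\tilde\theta^1=\tilde\theta^1\wedge\tilde\omega_1{}^1+\tilde A_{\bar1}{}^1\theta\wedge\tilde\theta^{\bar1}$,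 $\tilde\omega_1{}^1+\overline{\tilde\omega_1{}^1}=\tilde h^{1\bar1}d\tilde h_{1\bar1}$; scalar curvature $\tilde R$ by $d\tilde\omega_1{}^1\equiv\tilde R\tilde h_{1\bar1}\tilde\theta^1\wedge\tilde\theta^{\bar1}\pmod\theta$; $\tilde\nabla$ Tanaka–Webster covariant derivative, indices raised/lowered with $\tilde h$. Cartan tensor $\tilde Q_{11}=-\frac16\tilde\nabla_1\tilde\nabla_1\tilde R-\frac i2\tilde R\tilde A_{11}+\tilde\nabla_0\tilde A_{11}+\frac{2i}3\tilde\nabla_1\tilde\nabla^1\tilde A_{11}$; obstruction density $\mathcal O(\varphi)=\frac13(\tilde\nabla^1\tilde\nabla^1\tilde Q_{11}-i\tilde A^{11}\tilde Q_{11})$. *)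

theory Defs
  imports "HOL-Analysis.Analysis"
begin

type_synonym pt = "complex \<times> complex"
text \<open>A complex vector (a,b,c,d) stands for a d/dz + b d/dw + c d/dzbar + d d/dwbar.\<close>
type_synonym cvec = "complex \<times> complex \<times> complex \<times> complex"
type_synonym cvf = "pt \<Rightarrow> cvec"

definition S3 :: "pt set" where
  "S3 = {(z, w). (cmod z)\<^sup>2 + (cmod w)\<^sup>2 = 1}"

definition qadd :: "cvec \<Rightarrow> cvec \<Rightarrow> cvec" where
  "qadd u v = (case u of (a, b, c, d) \<Rightarrow> case v of (a', b', c', d') \<Rightarrow>
      (a + a', b + b', c + c', d + d'))"

definition qscale :: "complex \<Rightarrow> cvec \<Rightarrow> cvec" where
  "qscale k u = (case u of (a, b, c, d) \<Rightarrow> (k * a, k * b, k * c, k * d))"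

definition qconj :: "cvec \<Rightarrow> cvec" where
  "qconj u = (case u of (a, b, c, d) \<Rightarrow> (cnj c, cnj d, cnj a, cnj b))"

text \<open>Real and imaginary parts U, V (real vectors in C^2 = R^4) of a complex vector X = U + i V.\<close>
definition re_vec :: "cvec \<Rightarrow> pt" where
  "re_vec u = (case u of (a, b, c, d) \<Rightarrow> ((a + cnj c) / 2, (b + cnj d) / 2))"

definition im_vec :: "cvec \<Rightarrow> pt" where
  "im_vec u = (case u of (a, b, c, d) \<Rightarrow> ((a - cnj c) / (2 * \<i>), (b - cnj d) / (2 * \<i>)))"

definition cder :: "cvf \<Rightarrow> (pt \<Rightarrow> complex) \<Rightarrow> pt \<Rightarrow> complex" where
  "cder X f p = (let D = frechet_derivative f (at p within S3)
                 in D (re_vec (X p)) + \<i> * D (im_vec (X p)))"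

fun iterd :: "cvf list \<Rightarrow> (pt \<Rightarrow> complex) \<Rightarrow> pt \<Rightarrow> complex" where
  "iterd [] f = f"
| "iterd (X # Xs) f = cder X (iterd Xs f)"

definition Zf1 :: cvf where
  "Zf1 p = (case p of (z, w) \<Rightarrow> (cnj w, - cnj z, 0, 0))"

definition Zf1b :: cvf where
  "Zf1b p = (case p of (z, w) \<Rightarrow> (0, 0, w, - z))"

definition Tf :: cvf where
  "Tf p = (case p of (z, w) \<Rightarrow> (\<i> * z, \<i> * w, - \<i> * cnj z, - \<i> * cnj w))"

definition smoothS3 :: "(pt \<Rightarrow> complex) \<Rightarrow> bool" where
  "smoothS3 f \<longleftrightarrow> (\<forall>Xs. set Xs \<subseteq> {Tf, Zf1, Zf1b} \<longrightarrow>
      (\<forall>p\<in>S3. iterd Xs f differentiable (at p within S3)))"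

definition Zt :: "(pt \<Rightarrow> complex) \<Rightarrow> cvf" where
  "Zt \<phi> p = qadd (Zf1 p) (qscale (\<phi> p) (Zf1b p))"

definition Ztb :: "(pt \<Rightarrow> complex) \<Rightarrow> cvf" where
  "Ztb \<phi> p = qadd (Zf1b p) (qscale (cnj (\<phi> p)) (Zf1 p))"

definition frame :: "(pt \<Rightarrow> complex) \<Rightarrow> cvf list" where
  "frame \<phi> = [Tf, Zt \<phi>, Ztb \<phi>]"

definition bracket :: "cvf \<Rightarrow> cvf \<Rightarrow> cvf" where
  "bracket X Y p =
     (cder X (\<lambda>q. fst (Y q)) p - cder Y (\<lambda>q. fst (X q)) p,
      cder X (\<lambda>q. fst (snd (Y q))) p - cder Y (\<lambda>q. fst (snd (X q))) p,
      cder X (\<lambda>q. fst (snd (snd (Y q)))) p - cder Y (\<lambda>q. fst (snd (snd (X q)))) p,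
      cder X (\<lambda>q. snd (snd (snd (Y q)))) p - cder Y (\<lambda>q. snd (snd (snd (X q)))) p)"

definition frame_coeffs :: "(pt \<Rightarrow> complex) \<Rightarrow> pt \<Rightarrow> cvec \<Rightarrow> complex \<times> complex \<times> complex" where
  "frame_coeffs \<phi> p v = (THE (c0, c1, c2).
      v = qadd (qscale c0 (Tf p)) (qadd (qscale c1 (Zt \<phi> p)) (qscale c2 (Ztb \<phi> p))))"

text \<open>1-forms are represented as maps pt => cvec => complex.\<close>
definition theta :: "pt \<Rightarrow> cvec \<Rightarrow> complex" where
  "theta p v = (case p of (z, w) \<Rightarrow> case v of (a, b, c, d) \<Rightarrow> - \<i> * (cnj z * a + cnj w * b))"

text \<open>The coframe (theta, theta^1, theta^1bar) dual to (T, Zt_1, Zt_1bar).\<close>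
definition th1 :: "(pt \<Rightarrow> complex) \<Rightarrow> pt \<Rightarrow> cvec \<Rightarrow> complex" where
  "th1 \<phi> p v = fst (snd (frame_coeffs \<phi> p v))"

definition th1b :: "(pt \<Rightarrow> complex) \<Rightarrow> pt \<Rightarrow> cvec \<Rightarrow> complex" where
  "th1b \<phi> p v = snd (snd (frame_coeffs \<phi> p v))"

definition frame_form :: "(pt \<Rightarrow> complex) \<Rightarrow> pt \<Rightarrow> complex \<times> complex \<times> complex \<Rightarrow> cvec \<Rightarrow> complex" where
  "frame_form \<phi> p wv v = (case frame_coeffs \<phi> p v of (c0, c1, c2) \<Rightarrow>
      case wv of (w0, w1, w2) \<Rightarrow> w0 * c0 + w1 * c1 + w2 * c2)"

text \<open>Wedge product convention: (a ^ b)(X,Y) = a(X)b(Y) - a(Y)b(X), consistent with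
  d a(X,Y) = X(a(Y)) - Y(a(X)) - a([X,Y]).\<close>
definition wedge :: "(cvec \<Rightarrow> complex) \<Rightarrow> (cvec \<Rightarrow> complex) \<Rightarrow> cvec \<Rightarrow> cvec \<Rightarrow> complex" where
  "wedge \<alpha> \<beta> u v = \<alpha> u * \<beta> v - \<alpha> v * \<beta> u"

definition dform1 :: "(pt \<Rightarrow> cvec \<Rightarrow> complex) \<Rightarrow> cvf \<Rightarrow> cvf \<Rightarrow> pt \<Rightarrow> complex" where
  "dform1 \<alpha> X Y p = cder X (\<lambda>q. \<alpha> q (Y q)) p - cder Y (\<lambda>q. \<alpha> q (X q)) p - \<alpha> p (bracket X Y p)"

definition ht :: "(pt \<Rightarrow> complex) \<Rightarrow> pt \<Rightarrow> complex" where
  "ht \<phi> p = complex_of_real (1 - (cmod (\<phi> p))\<^sup>2)"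

text \<open>Tanaka--Webster connection form omega_1^1 (by its values on the frame) and torsion
  A_{1bar}^1 at p, defined by the structure equations
  d theta^1 = theta^1 ^ omega + A theta ^ theta^1bar and omega + omegabar = h^{-1} dh.\<close>
definition tw :: "(pt \<Rightarrow> complex) \<Rightarrow> pt \<Rightarrow> (complex \<times> complex \<times> complex) \<times> complex" where
  "tw \<phi> p = (THE (wv, A).
      (\<forall>X\<in>set (frame \<phi>). \<forall>Y\<in>set (frame \<phi>).
         dform1 (th1 \<phi>) X Y p
           = wedge (th1 \<phi> p) (frame_form \<phi> p wv) (X p) (Y p)
             + A * wedge (theta p) (th1b \<phi> p) (X p) (Y p)) \<and>
      (\<forall>X\<in>set (frame \<phi>).
         frame_form \<phi> p wv (X p) + cnj (frame_form \<phi> p wv (qconj (X p)))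
           = cder X (ht \<phi>) p / ht \<phi> p))"

definition omega :: "(pt \<Rightarrow> complex) \<Rightarrow> pt \<Rightarrow> cvec \<Rightarrow> complex" where
  "omega \<phi> p v = frame_form \<phi> p (fst (tw \<phi> p)) v"

definition omegab :: "(pt \<Rightarrow> complex) \<Rightarrow> pt \<Rightarrow> cvec \<Rightarrow> complex" where
  "omegab \<phi> p v = cnj (omega \<phi> p (qconj v))"

definition torsion :: "(pt \<Rightarrow> complex) \<Rightarrow> pt \<Rightarrow> complex" where
  "torsion \<phi> p = snd (tw \<phi> p)"

text \<open>Scalar curvature: d omega = R h theta^1 ^ theta^1bar (mod theta).\<close>
definition scal :: "(pt \<Rightarrow> complex) \<Rightarrow> pt \<Rightarrow> complex" where
  "scal \<phi> p = (THE r. \<exists>bv. \<forall>X\<in>set (frame \<phi>). \<forall>Y\<in>set (frame \<phi>).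
      dform1 (omega \<phi>) X Y p - r * ht \<phi> p * wedge (th1 \<phi> p) (th1b \<phi> p) (X p) (Y p)
        = wedge (theta p) (frame_form \<phi> p bv) (X p) (Y p))"

text \<open>Tanaka--Webster covariant derivative along X of the component F of a tensor with
  net k unbarred lower indices (lower minus upper) and net l barred lower indices.\<close>
definition cov :: "(pt \<Rightarrow> complex) \<Rightarrow> int \<Rightarrow> int \<Rightarrow> cvf \<Rightarrow> (pt \<Rightarrow> complex) \<Rightarrow> pt \<Rightarrow> complex" where
  "cov \<phi> k l X F p = cder X F p - of_int k * omega \<phi> p (X p) * F p
                     - of_int l * omegab \<phi> p (X p) * F p"

text \<open>A_{1bar 1bar} = h_{1 1bar} A_{1bar}^1, A_{11} = conj A_{1bar 1bar},
  A^{11} = h^{1 1bar} h^{1 1bar} A_{1bar 1bar}.\<close>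
definition Abb :: "(pt \<Rightarrow> complex) \<Rightarrow> pt \<Rightarrow> complex" where
  "Abb \<phi> p = ht \<phi> p * torsion \<phi> p"

definition A11 :: "(pt \<Rightarrow> complex) \<Rightarrow> pt \<Rightarrow> complex" where
  "A11 \<phi> p = cnj (Abb \<phi> p)"

definition Aup :: "(pt \<Rightarrow> complex) \<Rightarrow> pt \<Rightarrow> complex" where
  "Aup \<phi> p = inverse (ht \<phi> p) * inverse (ht \<phi> p) * Abb \<phi> p"

definition Q11 :: "(pt \<Rightarrow> complex) \<Rightarrow> pt \<Rightarrow> complex" where
  "Q11 \<phi> p =
     - (1/6) * cov \<phi> 1 0 (Zt \<phi>) (cov \<phi> 0 0 (Zt \<phi>) (scal \<phi>)) p
     - (\<i>/2) * scal \<phi> p * A11 \<phi> p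
     + cov \<phi> 2 0 Tf (A11 \<phi>) p
     + (2*\<i>/3) * cov \<phi> 1 0 (Zt \<phi>)
                   (\<lambda>q. inverse (ht \<phi> q) * cov \<phi> 2 0 (Ztb \<phi>) (A11 \<phi>) q) p"

definition obstruction :: "(pt \<Rightarrow> complex) \<Rightarrow> pt \<Rightarrow> complex" where
  "obstruction \<phi> p = (1/3) *
     (inverse (ht \<phi> p) * cov \<phi> 1 0 (Ztb \<phi>)
        (\<lambda>q. inverse (ht \<phi> q) * cov \<phi> 2 0 (Ztb \<phi>) (Q11 \<phi>) q) p
      - \<i> * Aup \<phi> p * Q11 \<phi> p)"

text \<open>A jet variable (b, ds): b = True means phibar, otherwise phi; ds lists the derivatives
  (False = Z_1, True = Z_1bar), applied as Z_{ds!0}(Z_{ds!1}(... phi)).\<close>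
type_synonym jetvar = "bool \<times> bool list"

definition jet :: "(pt \<Rightarrow> complex) \<Rightarrow> jetvar \<Rightarrow> pt \<Rightarrow> complex" where
  "jet \<phi> v = iterd (map (\<lambda>d. if d then Zf1b else Zf1) (snd v))
                 (if fst v then (\<lambda>q. cnj (\<phi> q)) else \<phi>)"

text \<open>A polynomial with constant complex coefficients: list of monomials (coefficient, factors).\<close>
type_synonym jetpoly = "(complex \<times> jetvar list) list"

definition polyval :: "jetpoly \<Rightarrow> (pt \<Rightarrow> complex) \<Rightarrow> pt \<Rightarrow> complex" where
  "polyval P \<phi> p = (\<Sum>m\<leftarrow>P. fst m * (\<Prod>v\<leftarrow>snd m. jet \<phi> v p))"

definition mon_order :: "jetvar list \<Rightarrow> nat" where
  "mon_order fs = (\<Sum>v\<leftarrow>fs. length (snd v))"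

end

theory Submission
  imports Defs
begin


lemma S3_norm: "S3 = {q. norm q = 1}"
  unfolding S3_def by (auto simp: norm_prod_def)

lemma in_S3: "(z, w) \<in> S3 \<longleftrightarrow> (cmod z)\<^sup>2 + (cmod w)\<^sup>2 = 1"
  by (simp add: S3_def)

lemma deriv_unique_S3:
  assumes p: "p \<in> S3" and u: "inner p u = 0"
    and d1: "(f has_derivative D1) (at p within S3)"
    and d2: "(f has_derivative D2) (at p within S3)"
  shows "D1 u = D2 u"
proof (cases "u = 0")
  case True
  have "linear D1" "linear D2" using d1 d2 by (auto dest: has_derivative_linear)
  then show ?thesis using True by (simp add: linear_0)
next
  case False
  define c where "c = norm u"
  have c: "c > 0" using False by (simp add: c_def)
  have np: "norm p = 1" using p by (simp add: S3_norm)
  define g where "g t = cos (t*c) *\<^sub>R p + (sin (t*c)/c) *\<^sub>R u" for t :: real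
  have gS: "g t \<in> S3" for t
  proof -
    have "(norm (g t))\<^sup>2 = (cos (t*c))\<^sup>2 * (norm p)\<^sup>2 + (sin (t*c)/c)\<^sup>2 * (norm u)\<^sup>2
          + 2 * (cos (t*c) * (sin (t*c)/c)) * inner p u"
      unfolding g_def power2_norm_eq_inner
      by (simp add: inner_add_left inner_add_right inner_commute algebra_simps power2_eq_square)
    also have "\<dots> = 1" using c np u by (simp add: c_def field_simps)
    finally show ?thesis by (simp add: S3_norm power2_eq_1_iff) (smt (verit) norm_ge_zero)
  qed
  have g0: "g 0 = p" by (simp add: g_def)
  have gd: "(g has_derivative (\<lambda>t. t *\<^sub>R u)) (at 0)"
  proof -
    have "(g has_vector_derivative ((- sin (0*c) * c) *\<^sub>R p + (cos (0*c) * c / c) *\<^sub>R u)) (at 0)"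
      unfolding g_def
      by (auto intro!: derivative_eq_intros)
    then show ?thesis using c by (simp add: has_vector_derivative_def)
  qed
  have sub: "range g \<subseteq> S3" using gS by auto
  have ch: "((f \<circ> g) has_derivative (D \<circ> (\<lambda>t. t *\<^sub>R u))) (at 0)"
    if "(f has_derivative D) (at p within S3)" for D
  proof -
    have "(f has_derivative D) (at (g 0) within range g)"
      using has_derivative_subset[OF that sub] g0 by simp
    then show ?thesis using diff_chain_within[of g "\<lambda>t. t *\<^sub>R u" 0 UNIV f D] gd by simp
  qed
  have "D1 \<circ> (\<lambda>t. t *\<^sub>R u) = D2 \<circ> (\<lambda>t. t *\<^sub>R u)"
    using has_derivative_unique[OF ch[OF d1] ch[OF d2]] .
  then show ?thesis by (metis comp_apply scale_one)
qed

definition cv :: "(pt \<Rightarrow> complex) \<Rightarrow> cvec \<Rightarrow> complex" where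
  "cv D X = D (re_vec X) + \<i> * D (im_vec X)"

definition tang :: "pt \<Rightarrow> cvec \<Rightarrow> bool" where
  "tang p X \<longleftrightarrow> inner p (re_vec X) = 0 \<and> inner p (im_vec X) = 0"

lemma cder_eq:
  assumes p: "p \<in> S3" and t: "tang p (X p)" and d: "(f has_derivative D) (at p within S3)"
  shows "cder X f p = cv D (X p)"
proof -
  have "f differentiable (at p within S3)" using d by (auto simp: differentiable_def)
  then have d': "(f has_derivative frechet_derivative f (at p within S3)) (at p within S3)"
    by (simp add: frechet_derivative_works)
  show ?thesis
    unfolding cder_def cv_def Let_def
    using deriv_unique_S3[OF p _ d' d] t by (simp add: tang_def)
qed

lemma hd_transfer:
  assumes p: "p \<in> S3" and eq: "\<And>q. q \<in> S3 \<Longrightarrow> f q = g q"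
  shows "(f has_derivative D) (at p within S3) \<longleftrightarrow> (g has_derivative D) (at p within S3)"
proof
  assume "(f has_derivative D) (at p within S3)"
  then show "(g has_derivative D) (at p within S3)"
    by (rule has_derivative_transform_within[where d=1]) (use p eq in auto)
next
  assume "(g has_derivative D) (at p within S3)"
  then show "(f has_derivative D) (at p within S3)"
    by (rule has_derivative_transform_within[where d=1]) (use p eq in auto)
qed

lemma cder_local:
  assumes p: "p \<in> S3" and eq: "\<And>q. q \<in> S3 \<Longrightarrow> f q = g q"
  shows "cder X f p = cder X g p"
proof -
  have "frechet_derivative f (at p within S3) = frechet_derivative g (at p within S3)"
    unfolding frechet_derivative_def using hd_transfer[OF p eq] by simp
  then show ?thesis by (simp add: cder_def)
qed

lemma diff_local:
  assumes p: "p \<in> S3" and eq: "\<And>q. q \<in> S3 \<Longrightarrow> f q = g q"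
  shows "f differentiable (at p within S3) \<longleftrightarrow> g differentiable (at p within S3)"
  unfolding differentiable_def using hd_transfer[OF p eq] by simp

lemma re_vec_add: "re_vec (qadd u v) = re_vec u + re_vec v"
  by (cases u; cases v) (auto simp: re_vec_def qadd_def add_divide_distrib)

lemma im_vec_add: "im_vec (qadd u v) = im_vec u + im_vec v"
  by (cases u; cases v) (auto simp: im_vec_def qadd_def field_simps)

lemma re_vec_scale: "re_vec (qscale k u) = Re k *\<^sub>R re_vec u - Im k *\<^sub>R im_vec u"
  by (cases u; cases k) (auto simp: re_vec_def im_vec_def qscale_def scaleR_conv_of_real Complex_eq field_simps)

lemma im_vec_scale: "im_vec (qscale k u) = Re k *\<^sub>R im_vec u + Im k *\<^sub>R re_vec u"
  by (cases u; cases k) (auto simp: re_vec_def im_vec_def qscale_def scaleR_conv_of_real Complex_eq field_simps)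

lemma cv_add: "linear D \<Longrightarrow> cv D (qadd u v) = cv D u + cv D v"
  by (simp add: cv_def re_vec_add im_vec_add linear_add algebra_simps)

lemma cv_scale: "linear D \<Longrightarrow> cv D (qscale k u) = k * cv D u"
  apply (simp add: cv_def re_vec_scale im_vec_scale linear_add linear_diff linear_scale)
  apply (simp add: scaleR_conv_of_real complex_eq_iff algebra_simps)
  done

lemma tang_add: "tang p u \<Longrightarrow> tang p v \<Longrightarrow> tang p (qadd u v)"
  by (simp add: tang_def re_vec_add im_vec_add inner_add_right)

lemma tang_scale: "tang p u \<Longrightarrow> tang p (qscale k u)"
  by (simp add: tang_def re_vec_scale im_vec_scale inner_diff_right inner_add_right)

lemma tang_Zf1: "tang p (Zf1 p)"
  by (cases p) (simp add: tang_def Zf1_def re_vec_def im_vec_def inner_complex_def Re_divide Im_divide algebra_simps)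

lemma tang_Zf1b: "tang p (Zf1b p)"
  by (cases p) (simp add: tang_def Zf1b_def re_vec_def im_vec_def inner_complex_def Re_divide Im_divide algebra_simps)

lemma tang_Tf: "tang p (Tf p)"
  by (cases p) (simp add: tang_def Tf_def re_vec_def im_vec_def inner_complex_def algebra_simps)

lemma tang_Zt: "tang p (Zt \<phi> p)"
  by (simp add: Zt_def tang_add tang_scale tang_Zf1 tang_Zf1b)

lemma tang_Ztb: "tang p (Ztb \<phi> p)"
  by (simp add: Ztb_def tang_add tang_scale tang_Zf1 tang_Zf1b)

abbreviation dS :: "(pt \<Rightarrow> complex) \<Rightarrow> pt \<Rightarrow> bool" where
  "dS f p \<equiv> f differentiable (at p within S3)"

lemma dS_D: "dS f p \<Longrightarrow> \<exists>D. (f has_derivative D) (at p within S3)"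
  by (simp add: differentiable_def)

lemma cder_const:
  assumes "p \<in> S3" "tang p (X p)" shows "cder X (\<lambda>q. c) p = 0"
  using cder_eq[of p X "\<lambda>q. c", OF assms has_derivative_const] by (simp add: cv_def)

lemma cder_add:
  assumes p: "p \<in> S3" and t: "tang p (X p)" and f: "dS f p" and g: "dS g p"
  shows "cder X (\<lambda>q. f q + g q) p = cder X f p + cder X g p"
proof -
  obtain Df Dg where df: "(f has_derivative Df) (at p within S3)" and dg: "(g has_derivative Dg) (at p within S3)"
    using f g by (auto simp: differentiable_def)
  show ?thesis
    using cder_eq[of p X, OF p t has_derivative_add[OF df dg]] cder_eq[of p X, OF p t df] cder_eq[of p X, OF p t dg]
    by (simp add: cv_def algebra_simps)
qed

lemma cder_diff:
  assumes p: "p \<in> S3" and t: "tang p (X p)" and f: "dS f p" and g: "dS g p"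
  shows "cder X (\<lambda>q. f q - g q) p = cder X f p - cder X g p"
proof -
  obtain Df Dg where df: "(f has_derivative Df) (at p within S3)" and dg: "(g has_derivative Dg) (at p within S3)"
    using f g by (auto simp: differentiable_def)
  show ?thesis
    using cder_eq[of p X, OF p t has_derivative_diff[OF df dg]] cder_eq[of p X, OF p t df] cder_eq[of p X, OF p t dg]
    by (simp add: cv_def algebra_simps)
qed

lemma cder_mult:
  assumes p: "p \<in> S3" and t: "tang p (X p)" and f: "dS f p" and g: "dS g p"
  shows "cder X (\<lambda>q. f q * g q) p = f p * cder X g p + g p * cder X f p"
proof -
  obtain Df Dg where df: "(f has_derivative Df) (at p within S3)" and dg: "(g has_derivative Dg) (at p within S3)"
    using f g by (auto simp: differentiable_def)
  show ?thesis
    using cder_eq[of p X, OF p t has_derivative_mult[OF df dg]] cder_eq[of p X, OF p t df] cder_eq[of p X, OF p t dg]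
    by (simp add: cv_def algebra_simps)
qed

lemma cder_inverse:
  assumes p: "p \<in> S3" and t: "tang p (X p)" and f: "dS f p" and nz: "f p \<noteq> 0"
  shows "cder X (\<lambda>q. inverse (f q)) p = - cder X f p / (f p)\<^sup>2"
proof -
  obtain Df where df: "(f has_derivative Df) (at p within S3)"
    using f by (auto simp: differentiable_def)
  show ?thesis
    using cder_eq[of p X, OF p t Deriv.has_derivative_inverse[OF nz df]] cder_eq[of p X, OF p t df] nz
    by (simp add: cv_def field_simps power2_eq_square)
qed

lemma re_vec_qconj: "re_vec (qconj u) = re_vec u"
  by (cases u) (simp add: re_vec_def qconj_def add.commute)

lemma im_vec_qconj: "im_vec (qconj u) = - im_vec u"
  by (cases u) (simp add: im_vec_def qconj_def field_simps)

lemma tang_qconj: "tang p u \<Longrightarrow> tang p (qconj u)"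
  by (simp add: tang_def re_vec_qconj im_vec_qconj)

lemma cder_cnj:
  assumes p: "p \<in> S3" and t: "tang p (X p)" and f: "dS f p" and Y: "Y p = qconj (X p)"
  shows "cder X (\<lambda>q. cnj (f q)) p = cnj (cder Y f p)"
proof -
  obtain Df where df: "(f has_derivative Df) (at p within S3)"
    using f by (auto simp: differentiable_def)
  have lin: "linear Df" using df by (rule has_derivative_linear)
  have tY: "tang p (Y p)" using t Y by (simp add: tang_qconj)
  show ?thesis
    using cder_eq[of p X, OF p t has_derivative_cnj[OF df]] cder_eq[of p Y, OF p tY df] Y
    by (simp add: cv_def re_vec_qconj im_vec_qconj linear_neg[OF lin])
qed

lemma cder_lin:
  assumes p: "p \<in> S3" and tX: "tang p (X p)" and tY: "tang p (Y p)" and f: "dS f p"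
  shows "cder (\<lambda>q. qadd (X q) (qscale (k q) (Y q))) f p = cder X f p + k p * cder Y f p"
proof -
  obtain Df where df: "(f has_derivative Df) (at p within S3)"
    using f by (auto simp: differentiable_def)
  have lin: "linear Df" using df by (rule has_derivative_linear)
  have t: "tang p (qadd (X p) (qscale (k p) (Y p)))" using tX tY by (simp add: tang_add tang_scale)
  show ?thesis
    using cder_eq[of p "\<lambda>q. qadd (X q) (qscale (k q) (Y q))", OF p t df] cder_eq[of p X, OF p tX df] cder_eq[of p Y, OF p tY df]
    by (simp add: cv_add[OF lin] cv_scale[OF lin])
qed

lemma cder_Zt:
  assumes p: "p \<in> S3" and f: "dS f p"
  shows "cder (Zt \<phi>) f p = cder Zf1 f p + \<phi> p * cder Zf1b f p"
  using cder_lin[of p Zf1 Zf1b, OF p tang_Zf1 tang_Zf1b f, of \<phi>] by (simp add: Zt_def[abs_def])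

lemma cder_Ztb:
  assumes p: "p \<in> S3" and f: "dS f p"
  shows "cder (Ztb \<phi>) f p = cder Zf1b f p + cnj (\<phi> p) * cder Zf1 f p"
  using cder_lin[of p Zf1b Zf1, OF p tang_Zf1b tang_Zf1 f, of "\<lambda>q. cnj (\<phi> q)"] by (simp add: Ztb_def[abs_def])



lemma schwarz_aux:
  fixes F :: "'a::real_normed_vector \<Rightarrow> complex"
  assumes U: "open U" "p \<in> U" and dF: "\<And>q. q \<in> U \<Longrightarrow> (F has_derivative DF q) (at q)"
    and Hu: "((\<lambda>q. DF q u) has_derivative Hu) (at p)"
    and e: "e > 0"
  shows "\<exists>d>0. \<forall>t. 0 < t \<and> t < d \<longrightarrow>
     norm (F (p + t *\<^sub>R u + t *\<^sub>R v) - F (p + t *\<^sub>R u) - F (p + t *\<^sub>R v) + F p - (t*t) *\<^sub>R Hu v) \<le> e * (t*t)"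
proof -
  define M where "M = 2 * norm u + norm v + 1"
  have M: "M > 0" "M \<ge> 1" unfolding M_def using norm_ge_zero[of u] norm_ge_zero[of v] by linarith+
  have blHu: "bounded_linear Hu" using Hu by (rule has_derivative_bounded_linear)
  obtain d1 where d1: "d1 > 0" and d1': "\<And>y. norm (y - p) < d1 \<Longrightarrow>
      norm (DF y u - DF p u - Hu (y - p)) \<le> (e / M) * norm (y - p)"
    using Hu[unfolded has_derivative_at_alt] e M by (meson divide_pos_pos)
  obtain d2 where d2: "d2 > 0" and d2': "ball p d2 \<subseteq> U"
    using U by (meson open_contains_ball)
  define d where "d = min d1 d2 / M"
  have d: "d > 0" using d1 d2 M by (simp add: d_def)
  define r where "r y = DF y u - DF p u - Hu (y - p)" for y
  have rb: "norm (r y) \<le> (e / M) * norm (y - p)" if "norm (y - p) < d1" for y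
    using d1' that by (simp add: r_def)
  have inU: "y \<in> U" if "norm (y - p) < d2" for y
    using d2' that by (auto simp: dist_norm norm_minus_commute)
  have main: "norm (F (p + t *\<^sub>R u + t *\<^sub>R v) - F (p + t *\<^sub>R u) - F (p + t *\<^sub>R v) + F p - (t*t) *\<^sub>R Hu v) \<le> e * (t*t)"
    if t: "0 < t" "t < d" for t
  proof -
    have small: "norm (s *\<^sub>R u + t *\<^sub>R v) < min d1 d2" "norm (s *\<^sub>R u) < min d1 d2"
      if s: "0 \<le> s" "s \<le> t" for s
    proof -
      have n1: "norm (s *\<^sub>R u) = s * norm u" using s by simp
      have n2: "norm (t *\<^sub>R v) = t * norm v" using t by simp
      have tri: "norm (s *\<^sub>R u + t *\<^sub>R v) \<le> s * norm u + t * norm v"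
        using norm_triangle_ineq[of "s *\<^sub>R u" "t *\<^sub>R v"] n1 n2 by linarith
      have su: "s * norm u \<le> t * norm u" using s by (intro mult_right_mono) auto
      have tM: "t * M = 2 * (t * norm u) + t * norm v + t" by (simp add: M_def algebra_simps)
      have pos: "0 \<le> t * norm u" "0 \<le> t * norm v" using t by auto
      have dM: "d * M = min d1 d2" using M by (simp add: d_def)
      have lt: "t * M < min d1 d2" using mult_strict_right_mono[OF t(2) M(1)] dM by simp
      show "norm (s *\<^sub>R u + t *\<^sub>R v) < min d1 d2" using tri su tM pos lt t by linarith
      show "norm (s *\<^sub>R u) < min d1 d2" using n1 su tM pos lt t by linarith
    qed
    define \<psi> where "\<psi> s = F (p + s *\<^sub>R u + t *\<^sub>R v) - F (p + s *\<^sub>R u) - (s * t) *\<^sub>R Hu v" for s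
    define \<psi>' where "\<psi>' s = (\<lambda>h. DF (p + s *\<^sub>R u + t *\<^sub>R v) (h *\<^sub>R u) - DF (p + s *\<^sub>R u) (h *\<^sub>R u)
                           - (h * t) *\<^sub>R Hu v)" for s
    have der: "(\<psi> has_derivative \<psi>' s) (at s)" if s: "0 \<le> s" "s \<le> t" for s
    proof -
      have U1: "p + s *\<^sub>R u + t *\<^sub>R v \<in> U" using inU[of "p + s *\<^sub>R u + t *\<^sub>R v"] small[OF s] by (simp add: add.assoc)
      have U2: "p + s *\<^sub>R u \<in> U" using inU[of "p + s *\<^sub>R u"] small[OF s] by simp
      have g1: "((\<lambda>s. p + s *\<^sub>R u + t *\<^sub>R v) has_derivative (\<lambda>h. h *\<^sub>R u)) (at s)"
        by (auto intro!: derivative_eq_intros)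
      have g2: "((\<lambda>s. p + s *\<^sub>R u) has_derivative (\<lambda>h. h *\<^sub>R u)) (at s)"
        by (auto intro!: derivative_eq_intros)
      have c1: "((\<lambda>s. F (p + s *\<^sub>R u + t *\<^sub>R v)) has_derivative (\<lambda>h. DF (p + s *\<^sub>R u + t *\<^sub>R v) (h *\<^sub>R u))) (at s)"
        using has_derivative_compose[OF g1 dF[OF U1]] by simp
      have c2: "((\<lambda>s. F (p + s *\<^sub>R u)) has_derivative (\<lambda>h. DF (p + s *\<^sub>R u) (h *\<^sub>R u))) (at s)"
        using has_derivative_compose[OF g2 dF[OF U2]] by simp
      have c3: "((\<lambda>s. (s * t) *\<^sub>R Hu v) has_derivative (\<lambda>h. (h * t) *\<^sub>R Hu v)) (at s)"
        by (auto intro!: derivative_eq_intros)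
      show ?thesis unfolding \<psi>_def \<psi>'_def
        by (rule has_derivative_diff[OF has_derivative_diff[OF c1 c2] c3])
    qed
    have cont: "continuous_on {0..t} \<psi>"
      using der by (meson atLeastAtMost_iff continuous_at_imp_continuous_on has_derivative_continuous)
    obtain s where s: "s \<in> {0<..<t}" and mv: "norm (\<psi> t - \<psi> 0) \<le> norm (\<psi>' s (t - 0))"
      using mvt_general[OF t(1) cont, of \<psi>'] der by force
    have s': "0 \<le> s" "s \<le> t" using s by auto
    have lin1: "linear (DF (p + s *\<^sub>R u + t *\<^sub>R v))" using dF[of "p + s *\<^sub>R u + t *\<^sub>R v"] inU small[OF s']
      by (simp add: add.assoc has_derivative_linear)
    have lin2: "linear (DF (p + s *\<^sub>R u))" using dF[of "p + s *\<^sub>R u"] inU small[OF s']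
      by (simp add: has_derivative_linear)
    have "\<psi>' s t = t *\<^sub>R (DF (p + s *\<^sub>R u + t *\<^sub>R v) u - DF (p + s *\<^sub>R u) u - t *\<^sub>R Hu v)"
      by (simp add: \<psi>'_def linear_scale[OF lin1] linear_scale[OF lin2] scaleR_diff_right)
    also have "DF (p + s *\<^sub>R u + t *\<^sub>R v) u - DF (p + s *\<^sub>R u) u - t *\<^sub>R Hu v
       = r (p + s *\<^sub>R u + t *\<^sub>R v) - r (p + s *\<^sub>R u)"
      by (simp add: r_def linear_add[OF bounded_linear.linear[OF blHu]] linear_scale[OF bounded_linear.linear[OF blHu]] add.assoc)
    finally have eq: "\<psi>' s t = t *\<^sub>R (r (p + s *\<^sub>R u + t *\<^sub>R v) - r (p + s *\<^sub>R u))" .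
    have "norm (r (p + s *\<^sub>R u + t *\<^sub>R v) - r (p + s *\<^sub>R u))
          \<le> (e/M) * norm (s *\<^sub>R u + t *\<^sub>R v) + (e/M) * norm (s *\<^sub>R u)"
      using rb[of "p + s *\<^sub>R u + t *\<^sub>R v"] rb[of "p + s *\<^sub>R u"] small[OF s']
      by (smt (verit, ccfv_SIG) add.assoc add_diff_cancel_left' min_less_iff_conj norm_triangle_ineq4)
    also have "\<dots> \<le> (e/M) * (t * M)"
    proof -
      have "norm (s *\<^sub>R u + t *\<^sub>R v) + norm (s *\<^sub>R u) \<le> (s * norm u + t * norm v) + s * norm u"
        using s' t by (smt (verit) norm_scaleR norm_triangle_ineq abs_of_nonneg)
      also have "\<dots> \<le> t * M" using s' t by (simp add: M_def algebra_simps) (smt (verit) mult_right_mono norm_ge_zero)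
      finally have "norm (s *\<^sub>R u + t *\<^sub>R v) + norm (s *\<^sub>R u) \<le> t * M" .
      then have "(e/M) * (norm (s *\<^sub>R u + t *\<^sub>R v) + norm (s *\<^sub>R u)) \<le> (e/M) * (t * M)"
        using e M by (intro mult_left_mono) auto
      then show ?thesis by (simp add: distrib_left)
    qed
    also have "\<dots> = e * t" using M by simp
    finally have rbound: "norm (r (p + s *\<^sub>R u + t *\<^sub>R v) - r (p + s *\<^sub>R u)) \<le> e * t" .
    have "\<psi> t - \<psi> 0 = F (p + t *\<^sub>R u + t *\<^sub>R v) - F (p + t *\<^sub>R u) - F (p + t *\<^sub>R v) + F p - (t*t) *\<^sub>R Hu v"
      by (simp add: \<psi>_def)
    then have "norm (F (p + t *\<^sub>R u + t *\<^sub>R v) - F (p + t *\<^sub>R u) - F (p + t *\<^sub>R v) + F p - (t*t) *\<^sub>R Hu v)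
       \<le> norm (\<psi>' s t)" using mv by simp
    also have "\<dots> = t * norm (r (p + s *\<^sub>R u + t *\<^sub>R v) - r (p + s *\<^sub>R u))" using eq t by simp
    also have "\<dots> \<le> t * (e * t)" using rbound t by (simp add: mult_left_mono)
    finally show ?thesis by (simp add: algebra_simps)
  qed
  show ?thesis using d main by blast
qed

lemma schwarz:
  fixes F :: "'a::real_normed_vector \<Rightarrow> complex"
  assumes U: "open U" "p \<in> U" and dF: "\<And>q. q \<in> U \<Longrightarrow> (F has_derivative DF q) (at q)"
    and Hu: "((\<lambda>q. DF q u) has_derivative Hu) (at p)"
    and Hv: "((\<lambda>q. DF q v) has_derivative Hv) (at p)"
  shows "Hu v = Hv u"
proof (rule ccontr)
  assume ne: "Hu v \<noteq> Hv u"
  define e where "e = norm (Hu v - Hv u) / 3"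
  have e: "e > 0" using ne by (simp add: e_def)
  obtain d1 where d1: "d1 > 0" and b1: "\<And>t. 0 < t \<Longrightarrow> t < d1 \<Longrightarrow>
     norm (F (p + t *\<^sub>R u + t *\<^sub>R v) - F (p + t *\<^sub>R u) - F (p + t *\<^sub>R v) + F p - (t*t) *\<^sub>R Hu v) \<le> e * (t*t)"
    using schwarz_aux[OF U dF Hu e, of v] by blast
  obtain d2 where d2: "d2 > 0" and b2: "\<And>t. 0 < t \<Longrightarrow> t < d2 \<Longrightarrow>
     norm (F (p + t *\<^sub>R v + t *\<^sub>R u) - F (p + t *\<^sub>R v) - F (p + t *\<^sub>R u) + F p - (t*t) *\<^sub>R Hv u) \<le> e * (t*t)"
    using schwarz_aux[OF U dF Hv e, of u] by blast
  define t where "t = min d1 d2 / 2"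
  have t: "0 < t" "t < d1" "t < d2" using d1 d2 by (auto simp: t_def)
  define A where "A = F (p + t *\<^sub>R u + t *\<^sub>R v) - F (p + t *\<^sub>R u) - F (p + t *\<^sub>R v) + F p"
  have A2: "F (p + t *\<^sub>R v + t *\<^sub>R u) - F (p + t *\<^sub>R v) - F (p + t *\<^sub>R u) + F p = A"
    by (simp add: A_def add.commute add.left_commute)
  have "(t*t) *\<^sub>R (Hu v - Hv u) = (A - (t*t) *\<^sub>R Hv u) - (A - (t*t) *\<^sub>R Hu v)"
    by (simp add: algebra_simps)
  then have "norm ((t*t) *\<^sub>R (Hu v - Hv u)) \<le> norm (A - (t*t) *\<^sub>R Hv u) + norm (A - (t*t) *\<^sub>R Hu v)"
    by (metis norm_triangle_ineq4)
  also have "\<dots> \<le> e * (t*t) + e * (t*t)"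
    using b1[OF t(1,2)] b2[OF t(1,3)] A2 by (simp add: A_def add_mono)
  finally have "(t*t) * norm (Hu v - Hv u) \<le> 2 * e * (t*t)" using t by simp
  then have "norm (Hu v - Hv u) \<le> 2 * e" using t by simp
  then show False using e by (simp add: e_def)
qed



definition e1 :: "pt \<Rightarrow> pt" where "e1 q = (case q of (z, w) \<Rightarrow> (\<i> * z, \<i> * w))"
definition e2 :: "pt \<Rightarrow> pt" where "e2 q = (case q of (z, w) \<Rightarrow> (cnj w, - cnj z))"
definition e3 :: "pt \<Rightarrow> pt" where "e3 q = (case q of (z, w) \<Rightarrow> (\<i> * cnj w, - (\<i> * cnj z)))"

lemma re_Tf: "re_vec (Tf q) = e1 q"
proof -
  obtain z w where q: "q = (z, w)" by (cases q)
  have a: "cnj (- \<i> * cnj z) = \<i> * z" "cnj (- \<i> * cnj w) = \<i> * w" by simp_all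
  show ?thesis unfolding q Tf_def re_vec_def e1_def by (simp only: prod.case a) simp
qed

lemma im_Tf: "im_vec (Tf q) = 0"
proof -
  obtain z w where q: "q = (z, w)" by (cases q)
  have a: "cnj (- \<i> * cnj z) = \<i> * z" "cnj (- \<i> * cnj w) = \<i> * w" by simp_all
  show ?thesis unfolding q Tf_def im_vec_def by (simp only: prod.case a) (simp add: zero_prod_def)
qed

lemma re_Zf1: "re_vec (Zf1 q) = (1/2) *\<^sub>R e2 q" and im_Zf1: "im_vec (Zf1 q) = (-1/2) *\<^sub>R e3 q"
  by (cases q; simp add: Zf1_def re_vec_def im_vec_def e2_def e3_def scaleR_conv_of_real)+

lemma re_Zf1b: "re_vec (Zf1b q) = (1/2) *\<^sub>R e2 q" and im_Zf1b: "im_vec (Zf1b q) = (1/2) *\<^sub>R e3 q"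
  by (cases q; simp add: Zf1b_def re_vec_def im_vec_def e2_def e3_def scaleR_conv_of_real)+

lemma nsq: "(norm (m::pt))\<^sup>2 = (Re (fst m) * Re (fst m) + Im (fst m) * Im (fst m) + Re (snd m) * Re (snd m) + Im (snd m) * Im (snd m))"
  by (cases m) (simp add: norm_prod_def cmod_power2 power2_eq_square, simp add: cmod_def power2_eq_square)

lemma decomp:
  fixes m x :: pt
  shows "(m \<bullet> x) *\<^sub>R m + (e1 m \<bullet> x) *\<^sub>R e1 m + (e2 m \<bullet> x) *\<^sub>R e2 m + (e3 m \<bullet> x) *\<^sub>R e3 m
         = (norm m)\<^sup>2 *\<^sub>R x"
proof -
  obtain z w where m: "m = (z, w)" by (cases m)
  obtain a b where x: "x = (a, b)" by (cases x)
  show ?thesis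
    unfolding nsq unfolding m x
    apply (simp add: e1_def e2_def e3_def inner_complex_def complex_eq_iff)
    apply (intro conjI; algebra)
    done
qed

lemma e_add: "e1 (x + y) = e1 x + e1 y" "e2 (x + y) = e2 x + e2 y" "e3 (x + y) = e3 x + e3 y"
  by (cases x; cases y; simp add: e1_def e2_def e3_def algebra_simps)+

lemma e_scale: "e1 (c *\<^sub>R x) = c *\<^sub>R e1 x" "e2 (c *\<^sub>R x) = c *\<^sub>R e2 x" "e3 (c *\<^sub>R x) = c *\<^sub>R e3 x"
  by (cases x; simp add: e1_def e2_def e3_def scaleR_conv_of_real algebra_simps)+

lemma e_linear: "linear e1" "linear e2" "linear e3"
  by (rule linearI, simp only: e_add, simp only: e_scale)+

lemma e_bl: "bounded_linear e1" "bounded_linear e2" "bounded_linear e3"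
  using e_linear by (auto simp: linear_conv_bounded_linear)

lemma e_orth:
  fixes q :: pt
  shows "e1 q \<bullet> q = 0" "e2 q \<bullet> q = 0" "e3 q \<bullet> q = 0"
    "e1 q \<bullet> e2 q = 0" "e1 q \<bullet> e3 q = 0" "e2 q \<bullet> e3 q = 0"
    "e2 q \<bullet> e1 q = 0" "e3 q \<bullet> e1 q = 0" "e3 q \<bullet> e2 q = 0"
    "e1 q \<bullet> e1 q = q \<bullet> q" "e2 q \<bullet> e2 q = q \<bullet> q" "e3 q \<bullet> e3 q = q \<bullet> q"
  by (cases q; simp add: e1_def e2_def e3_def inner_complex_def; algebra)+

lemma ee:
  fixes q :: pt
  shows "e2 (e2 q) = - q" "e3 (e2 q) = - e1 q" "e2 (e3 q) = e1 q" "e3 (e3 q) = - q"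
  by (cases q; simp add: e1_def e2_def e3_def)+

definition Dfm :: "(pt \<Rightarrow> complex) \<Rightarrow> pt \<Rightarrow> pt \<Rightarrow> complex" where
  "Dfm f m = frechet_derivative f (at m within S3)"

definition G1 :: "(pt \<Rightarrow> complex) \<Rightarrow> pt \<Rightarrow> complex" where "G1 f m = cder Tf f m"
definition G2 :: "(pt \<Rightarrow> complex) \<Rightarrow> pt \<Rightarrow> complex" where "G2 f m = cder Zf1 f m + cder Zf1b f m"
definition G3 :: "(pt \<Rightarrow> complex) \<Rightarrow> pt \<Rightarrow> complex" where "G3 f m = \<i> * (cder Zf1 f m - cder Zf1b f m)"

lemma Dfm_works: "dS f m \<Longrightarrow> (f has_derivative Dfm f m) (at m within S3)"
  by (simp add: Dfm_def frechet_derivative_works)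

lemma Dfm_linear: "dS f m \<Longrightarrow> linear (Dfm f m)"
  using Dfm_works has_derivative_linear by blast

lemma Dfm_e:
  assumes d: "dS f m"
  shows "Dfm f m (e1 m) = G1 f m" "Dfm f m (e2 m) = G2 f m" "Dfm f m (e3 m) = G3 f m"
proof -
  have l: "linear (Dfm f m)" using Dfm_linear[OF d] .
  have c1: "cder Tf f m = Dfm f m (e1 m)"
    by (simp add: cder_def Let_def Dfm_def[symmetric] re_Tf im_Tf linear_0[OF l])
  have c2: "cder Zf1 f m = (1/2) * Dfm f m (e2 m) - (\<i>/2) * Dfm f m (e3 m)"
    by (simp add: cder_def Let_def Dfm_def[symmetric] re_Zf1 im_Zf1 linear_scale[OF l] linear_neg[OF l] scaleR_conv_of_real)
  have c3: "cder Zf1b f m = (1/2) * Dfm f m (e2 m) + (\<i>/2) * Dfm f m (e3 m)"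
    by (simp add: cder_def Let_def Dfm_def[symmetric] re_Zf1b im_Zf1b linear_scale[OF l] scaleR_conv_of_real)
  show "Dfm f m (e1 m) = G1 f m" using c1 by (simp add: G1_def)
  show "Dfm f m (e2 m) = G2 f m" using c2 c3 by (simp add: G2_def)
  have "cder Zf1 f m - cder Zf1b f m = - \<i> * Dfm f m (e3 m)" using c2 c3 by (simp add: algebra_simps)
  then show "Dfm f m (e3 m) = G3 f m" by (simp add: G3_def)
qed

lemma Dfm_tangent:
  assumes m: "m \<in> S3" and t: "m \<bullet> t = 0" and d: "dS f m"
  shows "Dfm f m t = of_real (e1 m \<bullet> t) * G1 f m + of_real (e2 m \<bullet> t) * G2 f m + of_real (e3 m \<bullet> t) * G3 f m"
proof -
  have l: "linear (Dfm f m)" using Dfm_linear[OF d] .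
  have nm: "norm m = 1" using m by (simp add: S3_norm)
  have "t = (e1 m \<bullet> t) *\<^sub>R e1 m + (e2 m \<bullet> t) *\<^sub>R e2 m + (e3 m \<bullet> t) *\<^sub>R e3 m"
    using decomp[of m t] nm t by (simp add: add.assoc)
  then have "Dfm f m t = Dfm f m ((e1 m \<bullet> t) *\<^sub>R e1 m + (e2 m \<bullet> t) *\<^sub>R e2 m + (e3 m \<bullet> t) *\<^sub>R e3 m)"
    by simp
  also have "\<dots> = of_real (e1 m \<bullet> t) * G1 f m + of_real (e2 m \<bullet> t) * G2 f m + of_real (e3 m \<bullet> t) * G3 f m"
    by (simp add: linear_add[OF l] linear_scale[OF l] Dfm_e[OF d] scaleR_conv_of_real)
  finally show ?thesis .
qed

definition Dn :: "pt \<Rightarrow> pt \<Rightarrow> pt" where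
  "Dn q v = inverse (norm q) *\<^sub>R v - ((q \<bullet> v) / (norm q)^3) *\<^sub>R q"

lemma sgn_S3: "q \<noteq> 0 \<Longrightarrow> sgn q \<in> S3"
  by (simp add: S3_norm norm_sgn)

lemma sgn_deriv:
  assumes q: "(q::pt) \<noteq> 0"
  shows "(sgn has_derivative Dn q) (at q)"
proof -
  have n: "norm q \<noteq> 0" using q by simp
  have dn: "(norm has_derivative (\<lambda>h. h \<bullet> sgn q)) (at q)" using has_derivative_norm[OF q] .
  have di: "((\<lambda>x. inverse (norm x)) has_derivative (\<lambda>h. - (inverse (norm q) * (h \<bullet> sgn q) * inverse (norm q)))) (at q)"
    using Deriv.has_derivative_inverse[OF n dn] .
  have "((\<lambda>x. inverse (norm x) *\<^sub>R x) has_derivative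
      (\<lambda>v. inverse (norm q) *\<^sub>R v + (- (inverse (norm q) * (v \<bullet> sgn q) * inverse (norm q))) *\<^sub>R q)) (at q)"
    (is "(?g has_derivative ?D) _")
    using has_derivative_scaleR[OF di has_derivative_ident] .
  moreover have "?D = Dn q"
    by (rule ext) (simp add: Dn_def sgn_div_norm inner_commute power3_eq_cube field_simps)
  moreover have "?g = sgn"
    by (rule ext) (simp add: sgn_div_norm field_simps)
  ultimately show ?thesis by metis
qed

lemma Dn_inner:
  assumes q: "(q::pt) \<noteq> 0" and x: "x \<bullet> q = 0"
  shows "x \<bullet> Dn q v = (x \<bullet> v) / norm q"
  using x by (simp add: Dn_def inner_diff_right field_simps)

lemma Dn_tangent:
  assumes q: "(q::pt) \<noteq> 0"
  shows "sgn q \<bullet> Dn q v = 0"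
proof -
  have n: "norm q \<noteq> 0" using q by simp
  have qq: "q \<bullet> q = (norm q)\<^sup>2" by (simp add: power2_norm_eq_inner)
  show ?thesis using n
    by (simp add: Dn_def sgn_div_norm inner_diff_right qq inner_commute power3_eq_cube power2_eq_square field_simps)
qed

lemma e_sgn: "e1 (sgn q) = inverse (norm q) *\<^sub>R e1 q" "e2 (sgn q) = inverse (norm q) *\<^sub>R e2 q"
   "e3 (sgn q) = inverse (norm q) *\<^sub>R e3 q"
  by (simp_all add: sgn_div_norm e_scale divide_inverse_commute)



lemma sgn_chain:
  assumes q: "(q::pt) \<noteq> 0" and d: "dS g (sgn q)"
  shows "((\<lambda>x. g (sgn x)) has_derivative (\<lambda>u. Dfm g (sgn q) (Dn q u))) (at q)"
proof -
  have o: "open (- {0::pt})" by (simp add: open_Compl)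
  have qU: "q \<in> - {0}" using q by simp
  have s: "(sgn has_derivative Dn q) (at q within - {0})"
    using sgn_deriv[OF q] by (rule has_derivative_at_withinI)
  have sub: "sgn ` (- {0::pt}) \<subseteq> S3"
  proof (rule image_subsetI)
    fix x :: pt assume "x \<in> - {0}" then show "sgn x \<in> S3" using sgn_S3 by simp
  qed
  have g: "(g has_derivative Dfm g (sgn q)) (at (sgn q) within sgn ` (- {0}))"
    using has_derivative_subset[OF Dfm_works[OF d] sub] .
  have "((g \<circ> sgn) has_derivative (Dfm g (sgn q) \<circ> Dn q)) (at q within - {0})"
    using diff_chain_within[OF s g] .
  then show ?thesis using at_within_open[OF qU o] by (simp add: o_def)
qed

definition N :: "pt \<Rightarrow> real" where "N q = inverse (q \<bullet> q)"

definition Phi :: "(pt \<Rightarrow> complex) \<Rightarrow> pt \<Rightarrow> pt \<Rightarrow> complex" where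
  "Phi f q u = of_real ((e1 q \<bullet> u) * N q) * G1 f (sgn q) + of_real ((e2 q \<bullet> u) * N q) * G2 f (sgn q)
             + of_real ((e3 q \<bullet> u) * N q) * G3 f (sgn q)"

lemma N_norm: "N q = inverse ((norm q)\<^sup>2)"
  by (simp add: N_def power2_norm_eq_inner)

lemma Dfm_Phi:
  assumes q: "(q::pt) \<noteq> 0" and d: "dS f (sgn q)"
  shows "Dfm f (sgn q) (Dn q u) = Phi f q u"
proof -
  have n: "norm q \<noteq> 0" using q by simp
  have t: "sgn q \<bullet> Dn q u = 0" using Dn_tangent[OF q] .
  have o: "e1 (sgn q) \<bullet> q = 0" "e2 (sgn q) \<bullet> q = 0" "e3 (sgn q) \<bullet> q = 0"
    by (simp_all add: e_sgn e_orth)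
  have i: "e1 (sgn q) \<bullet> Dn q u = (e1 q \<bullet> u) * N q" "e2 (sgn q) \<bullet> Dn q u = (e2 q \<bullet> u) * N q"
      "e3 (sgn q) \<bullet> Dn q u = (e3 q \<bullet> u) * N q"
    by (simp only: Dn_inner[OF q o(1)] Dn_inner[OF q o(2)] Dn_inner[OF q o(3)];
        simp add: e_sgn N_norm power2_eq_square field_simps)+
  show ?thesis
    using Dfm_tangent[OF sgn_S3[OF q] t d] by (simp add: i Phi_def)
qed

lemma F_deriv:
  assumes q: "(q::pt) \<noteq> 0" and d: "dS f (sgn q)"
  shows "((\<lambda>x. f (sgn x)) has_derivative Phi f q) (at q)"
  using sgn_chain[OF q d] Dfm_Phi[OF q d] by (simp add: fun_eq_iff)

definition dN :: "pt \<Rightarrow> pt \<Rightarrow> real" where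
  "dN p v = - (inverse (p \<bullet> p) * (v \<bullet> p + p \<bullet> v) * inverse (p \<bullet> p))"

lemma N_deriv:
  assumes p: "(p::pt) \<noteq> 0"
  shows "(N has_derivative dN p) (at p)"
proof -
  have pp: "p \<bullet> p \<noteq> 0" using p by simp
  have "((\<lambda>x. x \<bullet> x) has_derivative (\<lambda>h. p \<bullet> h + h \<bullet> p)) (at p)"
    using has_derivative_inner[OF has_derivative_ident has_derivative_ident] .
  from Deriv.has_derivative_inverse[OF pp this] show ?thesis
    unfolding N_def[abs_def] dN_def by (simp add: add.commute)
qed

lemma e_deriv: "(e1 has_derivative e1) F" "(e2 has_derivative e2) F" "(e3 has_derivative e3) F"
  using e_bl by (simp_all add: bounded_linear_imp_has_derivative)

definition dG :: "(pt \<Rightarrow> complex) \<Rightarrow> pt \<Rightarrow> pt \<Rightarrow> complex" where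
  "dG g p v = Dfm g (sgn p) (Dn p v)"

definition H :: "(pt \<Rightarrow> complex) \<Rightarrow> pt \<Rightarrow> pt \<Rightarrow> pt \<Rightarrow> complex" where
  "H f p u v =
     of_real ((e1 v \<bullet> u) * N p + (e1 p \<bullet> u) * dN p v) * G1 f (sgn p) + of_real ((e1 p \<bullet> u) * N p) * dG (G1 f) p v
   + of_real ((e2 v \<bullet> u) * N p + (e2 p \<bullet> u) * dN p v) * G2 f (sgn p) + of_real ((e2 p \<bullet> u) * N p) * dG (G2 f) p v
   + of_real ((e3 v \<bullet> u) * N p + (e3 p \<bullet> u) * dN p v) * G3 f (sgn p) + of_real ((e3 p \<bullet> u) * N p) * dG (G3 f) p v"

lemma term_deriv:
  assumes p: "(p::pt) \<noteq> 0" and d: "dS g (sgn p)" and e: "(e has_derivative e) (at p)"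
    and r: "(r has_derivative r') (at p)"
  shows "((\<lambda>q. of_real ((e q \<bullet> r q) * N q) * g (sgn q)) has_derivative
     (\<lambda>v. of_real ((e v \<bullet> r p + e p \<bullet> r' v) * N p + (e p \<bullet> r p) * dN p v) * g (sgn p)
          + of_real ((e p \<bullet> r p) * N p) * dG g p v)) (at p)"
proof -
  have c: "((\<lambda>q. (e q \<bullet> r q) * N q) has_derivative
      (\<lambda>v. (e p \<bullet> r p) * dN p v + (e p \<bullet> r' v + e v \<bullet> r p) * N p)) (at p)"
    using has_derivative_mult[OF has_derivative_inner[OF e r] N_deriv[OF p]] .
  have g: "((\<lambda>q. g (sgn q)) has_derivative dG g p) (at p)"
    using sgn_chain[OF p d] by (simp add: dG_def[abs_def])
  have "((\<lambda>q. of_real ((e q \<bullet> r q) * N q) * g (sgn q)) has_derivative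
      (\<lambda>v. of_real ((e p \<bullet> r p) * N p) * dG g p v + of_real ((e p \<bullet> r p) * dN p v + (e p \<bullet> r' v + e v \<bullet> r p) * N p) * g (sgn p))) (at p)"
    using has_derivative_mult[OF has_derivative_of_real[OF c] g] .
  then show ?thesis
    by (rule has_derivative_eq_rhs) (simp add: fun_eq_iff algebra_simps)
qed

lemma Phi_deriv_gen:
  assumes p: "(p::pt) \<noteq> 0" and d1: "dS (G1 f) (sgn p)" and d2: "dS (G2 f) (sgn p)" and d3: "dS (G3 f) (sgn p)"
    and r: "(r has_derivative r') (at p)"
  shows "((\<lambda>q. Phi f q (r q)) has_derivative (\<lambda>v. H f p (r p) v + Phi f p (r' v))) (at p)"
proof -
  have "((\<lambda>q. of_real ((e1 q \<bullet> r q) * N q) * G1 f (sgn q) + of_real ((e2 q \<bullet> r q) * N q) * G2 f (sgn q)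
             + of_real ((e3 q \<bullet> r q) * N q) * G3 f (sgn q)) has_derivative
      (\<lambda>v. (of_real ((e1 v \<bullet> r p + e1 p \<bullet> r' v) * N p + (e1 p \<bullet> r p) * dN p v) * G1 f (sgn p)
          + of_real ((e1 p \<bullet> r p) * N p) * dG (G1 f) p v)
         + (of_real ((e2 v \<bullet> r p + e2 p \<bullet> r' v) * N p + (e2 p \<bullet> r p) * dN p v) * G2 f (sgn p)
          + of_real ((e2 p \<bullet> r p) * N p) * dG (G2 f) p v)
         + (of_real ((e3 v \<bullet> r p + e3 p \<bullet> r' v) * N p + (e3 p \<bullet> r p) * dN p v) * G3 f (sgn p)
          + of_real ((e3 p \<bullet> r p) * N p) * dG (G3 f) p v))) (at p)"
    by (intro has_derivative_add term_deriv[OF p d1 e_deriv(1) r] term_deriv[OF p d2 e_deriv(2) r]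
        term_deriv[OF p d3 e_deriv(3) r])
  then show ?thesis
    unfolding Phi_def[abs_def]
    by (rule has_derivative_eq_rhs) (simp add: fun_eq_iff H_def Phi_def algebra_simps)
qed

lemma Phi_deriv_const:
  assumes p: "(p::pt) \<noteq> 0" and d1: "dS (G1 f) (sgn p)" and d2: "dS (G2 f) (sgn p)" and d3: "dS (G3 f) (sgn p)"
  shows "((\<lambda>q. Phi f q u) has_derivative H f p u) (at p)"
  using Phi_deriv_gen[OF p d1 d2 d3 has_derivative_const[of u]] by (simp add: Phi_def)

lemma S3_nz: "p \<in> S3 \<Longrightarrow> (p::pt) \<noteq> 0"
  by (auto simp: S3_norm)

lemma sgn_S3_id: "p \<in> S3 \<Longrightarrow> sgn p = p"
  by (simp add: S3_norm sgn_div_norm)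

lemma H_sym:
  assumes p: "p \<in> S3" and df: "\<forall>m\<in>S3. dS f m"
    and d1: "dS (G1 f) p" and d2: "dS (G2 f) p" and d3: "dS (G3 f) p"
  shows "H f p u v = H f p v u"
proof -
  have p0: "p \<noteq> 0" using S3_nz[OF p] .
  have sp: "sgn p = p" using sgn_S3_id[OF p] .
  have dF: "((\<lambda>x. f (sgn x)) has_derivative Phi f q) (at q)" if "q \<in> - {0}" for q
    using F_deriv[of q f] that df sgn_S3[of q] by auto
  show ?thesis
    using schwarz[of "- {0}" p "\<lambda>x. f (sgn x)" "Phi f" u "H f p u" v "H f p v"] dF p0
      Phi_deriv_const[OF p0, of f u] Phi_deriv_const[OF p0, of f v] d1 d2 d3 sp
    by (simp add: open_Compl)
qed

lemma Dn_S3: "q \<in> S3 \<Longrightarrow> q \<bullet> t = 0 \<Longrightarrow> Dn q t = t"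
  by (simp add: Dn_def S3_norm)

lemma Phi_S3:
  assumes q: "q \<in> S3" and t: "q \<bullet> t = 0" and d: "dS f q"
  shows "Phi f q t = Dfm f q t"
  using Dfm_Phi[OF S3_nz[OF q], of f t] d Dn_S3[OF q t] sgn_S3_id[OF q] by simp

lemma cder_cder:
  assumes p: "p \<in> S3" and df: "\<forall>m\<in>S3. dS f m"
    and d1: "dS (G1 f) p" and d2: "dS (G2 f) p" and d3: "dS (G3 f) p"
    and rX: "bounded_linear rX" and iX: "bounded_linear iX"
    and X1: "\<And>q. re_vec (X q) = rX q" and X2: "\<And>q. im_vec (X q) = iX q"
    and t1: "\<And>q. q \<bullet> rX q = 0" and t2: "\<And>q. q \<bullet> iX q = 0"
    and tY: "tang p (Y p)"
  shows "cder Y (cder X f) p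
     = cv (\<lambda>v. H f p (rX p) v + Phi f p (rX v) + \<i> * (H f p (iX p) v + Phi f p (iX v))) (Y p)"
proof -
  have p0: "p \<noteq> 0" using S3_nz[OF p] .
  have sp: "sgn p = p" using sgn_S3_id[OF p] .
  have loc: "cder X f q = Phi f q (rX q) + \<i> * Phi f q (iX q)" if q: "q \<in> S3" for q
    using df q by (simp add: cder_def Let_def X1 X2 Dfm_def[symmetric] Phi_S3[OF q t1] Phi_S3[OF q t2])
  have dK: "((\<lambda>q. Phi f q (rX q) + \<i> * Phi f q (iX q)) has_derivative
      (\<lambda>v. H f p (rX p) v + Phi f p (rX v) + \<i> * (H f p (iX p) v + Phi f p (iX v)))) (at p)"
    using has_derivative_add[OF Phi_deriv_gen[OF p0, of f rX rX] has_derivative_mult_right[OF Phi_deriv_gen[OF p0, of f iX iX]]]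
      d1 d2 d3 sp bounded_linear_imp_has_derivative[OF rX] bounded_linear_imp_has_derivative[OF iX]
    by simp
  have "cder Y (cder X f) p = cder Y (\<lambda>q. Phi f q (rX q) + \<i> * Phi f q (iX q)) p"
    using cder_local[OF p loc] by simp
  also have "\<dots> = cv (\<lambda>v. H f p (rX p) v + Phi f p (rX v) + \<i> * (H f p (iX p) v + Phi f p (iX v))) (Y p)"
    using cder_eq[of p Y, OF p tY has_derivative_at_withinI[OF dK]] .
  finally show ?thesis .
qed

lemma Phi_scale: "Phi f p (c *\<^sub>R x) = of_real c * Phi f p x"
  by (simp add: Phi_def algebra_simps)

lemma Phi_neg: "Phi f p (- x) = - Phi f p x"
  by (simp add: Phi_def algebra_simps)

lemma H_scale1: "H f p (c *\<^sub>R x) v = of_real c * H f p x v"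
  by (simp add: H_def algebra_simps)

lemma H_neg1: "H f p (- x) v = - H f p x v"
  by (simp add: H_def algebra_simps)

lemma Phi_p:
  assumes p: "p \<in> S3"
  shows "Phi f p p = 0" "Phi f p (e1 p) = G1 f p"
proof -
  have pp: "p \<bullet> p = 1" using p by (simp add: S3_norm power2_norm_eq_inner[symmetric])
  have "e1 p \<bullet> p = 0" "e2 p \<bullet> p = 0" "e3 p \<bullet> p = 0" by (simp_all add: e_orth)
  then show "Phi f p p = 0" by (simp add: Phi_def)
  show "Phi f p (e1 p) = G1 f p"
    using pp sgn_S3_id[OF p] by (simp add: Phi_def e_orth N_def)
qed

lemma bl_scale: "bounded_linear g \<Longrightarrow> bounded_linear (\<lambda>q. c *\<^sub>R g q)"
  by (rule bounded_linear_compose[OF bounded_linear_scaleR_right])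

lemma e_neg: "e1 (- x) = - e1 x" "e2 (- x) = - e2 x" "e3 (- x) = - e3 x"
  by (cases x; simp add: e1_def e2_def e3_def)+

theorem commutator:
  assumes p: "p \<in> S3" and df: "\<forall>m\<in>S3. dS f m"
    and dT: "dS (cder Tf f) p" and dZ: "dS (cder Zf1 f) p" and dZb: "dS (cder Zf1b f) p"
  shows "cder Zf1 (cder Zf1b f) p - cder Zf1b (cder Zf1 f) p = - \<i> * cder Tf f p"
proof -
  have d1: "dS (G1 f) p" using dT by (simp add: G1_def[abs_def])
  have d2: "dS (G2 f) p" using dZ dZb by (simp add: G2_def[abs_def])
  have d3: "dS (G3 f) p" using dZ dZb by (simp add: G3_def[abs_def])
  have p0: "p \<noteq> 0" using S3_nz[OF p] .
  have sp: "sgn p = p" using sgn_S3_id[OF p] .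
  have linH: "linear (H f p u)" for u
    using Phi_deriv_const[OF p0, of f u] d1 d2 d3 sp by (simp add: has_derivative_linear)
  have H2: "H f p u (c *\<^sub>R v) = of_real c * H f p u v" "H f p u (- v) = - H f p u v" for u v c
    using linear_scale[OF linH[of u], of c v] linear_neg[OF linH[of u], of v] by (simp_all add: scaleR_conv_of_real)
  have tq: "q \<bullet> (c *\<^sub>R e2 q) = 0" "q \<bullet> (c *\<^sub>R e3 q) = 0" for q :: pt and c
    by (simp_all add: inner_commute[of q] e_orth)
  have tq2: "q \<bullet> e2 q = 0" "q \<bullet> e3 q = 0" for q :: pt
    by (simp_all add: inner_commute[of q] e_orth)
  have A: "cder Zf1 (cder Zf1b f) p = cv (\<lambda>v. H f p ((1/2) *\<^sub>R e2 p) v + Phi f p ((1/2) *\<^sub>R e2 v)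
      + \<i> * (H f p ((1/2) *\<^sub>R e3 p) v + Phi f p ((1/2) *\<^sub>R e3 v))) (Zf1 p)"
    by (rule cder_cder[of p f "\<lambda>q. (1/2) *\<^sub>R e2 q" "\<lambda>q. (1/2) *\<^sub>R e3 q" Zf1b Zf1])
       (simp_all add: p df d1 d2 d3 bl_scale e_bl re_Zf1b im_Zf1b tq tq2 tang_Zf1)
  have B: "cder Zf1b (cder Zf1 f) p = cv (\<lambda>v. H f p ((1/2) *\<^sub>R e2 p) v + Phi f p ((1/2) *\<^sub>R e2 v)
      + \<i> * (H f p ((-1/2) *\<^sub>R e3 p) v + Phi f p ((-1/2) *\<^sub>R e3 v))) (Zf1b p)"
    by (rule cder_cder[of p f "\<lambda>q. (1/2) *\<^sub>R e2 q" "\<lambda>q. (-1/2) *\<^sub>R e3 q" Zf1 Zf1b])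
       (simp_all add: p df d1 d2 d3 bl_scale e_bl re_Zf1 im_Zf1 tq tq2 tang_Zf1b bounded_linear_minus del: scaleR_minus_left)
  have sym: "H f p (e3 p) (e2 p) = H f p (e2 p) (e3 p)"
    using H_sym[OF p df d1 d2 d3] .
  have G1T: "G1 f p = cder Tf f p" by (simp add: G1_def)
  show ?thesis
    unfolding A B cv_def re_Zf1 im_Zf1 re_Zf1b im_Zf1b
    by (simp add: e_scale e_neg ee Phi_scale Phi_neg H_scale1 H_neg1 H2 Phi_p[OF p] sym G1T algebra_simps)
qed



definition base :: "(pt \<Rightarrow> complex) \<Rightarrow> bool \<Rightarrow> pt \<Rightarrow> complex" where
  "base \<phi> b = (if b then (\<lambda>q. cnj (\<phi> q)) else \<phi>)"

definition dsel :: "bool \<Rightarrow> cvf" where "dsel d = (if d then Zf1b else Zf1)"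

lemma jet_alt: "jet \<phi> (b, ds) = iterd (map dsel ds) (base \<phi> b)"
  by (simp add: jet_def dsel_def[abs_def] base_def)

definition W :: "cvf set" where "W = {Tf, Zf1, Zf1b}"

lemma iterd_append: "iterd (Xs @ Ys) f = iterd Xs (iterd Ys f)"
  by (induction Xs) auto

lemma smooth_iterd:
  assumes "smoothS3 g" "set Xs \<subseteq> W" shows "smoothS3 (iterd Xs g)"
  using assms unfolding smoothS3_def W_def
  by (metis iterd_append set_append Un_subset_iff)

lemma smooth_dS: "smoothS3 g \<Longrightarrow> p \<in> S3 \<Longrightarrow> dS g p"
  unfolding smoothS3_def by (metis empty_subsetI empty_set iterd.simps(1))

lemma W_tang: "X \<in> W \<Longrightarrow> tang p (X p)"
  by (auto simp: W_def tang_Tf tang_Zf1 tang_Zf1b)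

lemma qconj_Tf: "qconj (Tf q) = Tf q"
  by (cases q) (simp add: Tf_def qconj_def)
lemma qconj_Zf1: "qconj (Zf1 q) = Zf1b q"
  by (cases q) (simp add: Zf1_def Zf1b_def qconj_def)
lemma qconj_Zf1b: "qconj (Zf1b q) = Zf1 q"
  by (cases q) (simp add: Zf1_def Zf1b_def qconj_def)

lemma W_conj: "X \<in> W \<Longrightarrow> \<exists>Y\<in>W. \<forall>q. Y q = qconj (X q)"
  unfolding W_def using qconj_Tf qconj_Zf1 qconj_Zf1b by auto

lemma conj_words:
  assumes g: "smoothS3 g"
  shows "set Xs \<subseteq> W \<Longrightarrow> \<exists>Ys. set Ys \<subseteq> W \<and> (\<forall>q\<in>S3. iterd Xs (\<lambda>q. cnj (g q)) q = cnj (iterd Ys g q))"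
proof (induction Xs)
  case Nil
  then show ?case by (intro exI[of _ "[]"]) simp
next
  case (Cons X Xs)
  then obtain Ys where Ys: "set Ys \<subseteq> W" "\<forall>q\<in>S3. iterd Xs (\<lambda>q. cnj (g q)) q = cnj (iterd Ys g q)"
    by auto
  have XW: "X \<in> W" using Cons.prems by simp
  obtain Y where Y: "Y \<in> W" "\<And>q. Y q = qconj (X q)" using W_conj[OF XW] by blast
  have sm: "smoothS3 (iterd Ys g)" using smooth_iterd[OF g Ys(1)] .
  have "iterd (X # Xs) (\<lambda>q. cnj (g q)) q = cnj (iterd (Y # Ys) g q)" if q: "q \<in> S3" for q
  proof -
    have "iterd (X # Xs) (\<lambda>q. cnj (g q)) q = cder X (\<lambda>q. cnj (iterd Ys g q)) q"
      using cder_local[OF q Ys(2)[rule_format]] by simp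
    also have "\<dots> = cnj (cder Y (iterd Ys g) q)"
      by (rule cder_cnj[of q X "iterd Ys g" Y, OF q W_tang[OF XW, of q] smooth_dS[OF sm q] Y(2)[of q]])
    finally show ?thesis by simp
  qed
  then show ?case using Ys(1) Y(1) by (intro exI[of _ "Y # Ys"]) auto
qed

lemma smooth_cnj:
  assumes g: "smoothS3 g" shows "smoothS3 (\<lambda>q. cnj (g q))"
  unfolding smoothS3_def
proof (intro allI impI ballI)
  fix Xs p assume Xs: "set Xs \<subseteq> {Tf, Zf1, Zf1b}" and p: "p \<in> S3"
  obtain Ys where Ys: "set Ys \<subseteq> W" "\<forall>q\<in>S3. iterd Xs (\<lambda>q. cnj (g q)) q = cnj (iterd Ys g q)"
    using conj_words[OF g, of Xs] Xs by (auto simp: W_def)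
  have "iterd Ys g differentiable (at p within S3)"
    using g Ys(1) p by (auto simp: smoothS3_def W_def)
  then have "(\<lambda>q. cnj (iterd Ys g q)) differentiable (at p within S3)"
    by (simp add: differentiable_cnj_iff)
  then show "iterd Xs (\<lambda>q. cnj (g q)) differentiable (at p within S3)"
    using diff_local[OF p Ys(2)[rule_format]] by simp
qed

lemma smooth_base: "smoothS3 \<phi> \<Longrightarrow> smoothS3 (base \<phi> b)"
  by (simp add: base_def smooth_cnj)

lemma dsel_W: "set (map dsel ds) \<subseteq> W"
  by (auto simp: dsel_def W_def)

lemma smooth_jet: "smoothS3 \<phi> \<Longrightarrow> smoothS3 (jet \<phi> v)"
  by (cases v) (simp add: jet_alt smooth_iterd[OF smooth_base dsel_W])

lemma cder_jet: "cder (dsel d) (jet \<phi> (b, ds)) = jet \<phi> (b, d # ds)"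
  by (simp add: jet_alt)

lemma qconj_dsel: "qconj (dsel d q) = dsel (\<not> d) q"
  by (simp add: dsel_def qconj_Zf1 qconj_Zf1b)

lemma dsel_tang: "tang p (dsel d p)"
  by (simp add: dsel_def tang_Zf1 tang_Zf1b)

lemma jet_True:
  assumes sm: "smoothS3 \<phi>"
  shows "\<forall>q\<in>S3. jet \<phi> (True, ds) q = cnj (jet \<phi> (False, map Not ds) q)"
proof (induction ds)
  case Nil
  then show ?case by (simp add: jet_def)
next
  case (Cons d ds)
  show ?case
  proof
    fix q assume q: "q \<in> S3"
    have "jet \<phi> (True, d # ds) q = cder (dsel d) (jet \<phi> (True, ds)) q"
      by (simp add: cder_jet)
    also have "\<dots> = cder (dsel d) (\<lambda>q. cnj (jet \<phi> (False, map Not ds) q)) q"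
      using cder_local[OF q Cons.IH[rule_format]] by simp
    also have "\<dots> = cnj (cder (dsel (\<not> d)) (jet \<phi> (False, map Not ds)) q)"
      by (rule cder_cnj[of q "dsel d", OF q dsel_tang smooth_dS[OF smooth_jet[OF sm] q]]) (simp add: qconj_dsel)
    also have "\<dots> = cnj (jet \<phi> (False, map Not (d # ds)) q)"
      by (simp add: cder_jet)
    finally show "jet \<phi> (True, d # ds) q = cnj (jet \<phi> (False, map Not (d # ds)) q)" .
  qed
qed

lemma jet_cnj:
  assumes sm: "smoothS3 \<phi>" and q: "q \<in> S3"
  shows "cnj (jet \<phi> (b, ds) q) = jet \<phi> (\<not> b, map Not ds) q"
proof (cases b)
  case True
  then show ?thesis using jet_True[OF sm] q by simp
next
  case False
  then show ?thesis using jet_True[OF sm, of "map Not ds"] q by (simp add: comp_def)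
qed

lemma jet_T:
  assumes sm: "smoothS3 \<phi>" and p: "p \<in> S3"
  shows "cder Tf (jet \<phi> (b, ds)) p = \<i> * (jet \<phi> (b, False # True # ds) p - jet \<phi> (b, True # False # ds) p)"
proof -
  let ?f = "jet \<phi> (b, ds)"
  have sf: "smoothS3 ?f" using smooth_jet[OF sm] .
  have s1: "smoothS3 (iterd [X] ?f)" if "X \<in> W" for X using smooth_iterd[OF sf, of "[X]"] that by simp
  have c: "cder Zf1 (cder Zf1b ?f) p - cder Zf1b (cder Zf1 ?f) p = - \<i> * cder Tf ?f p"
    by (rule commutator[OF p])
       (use smooth_dS[OF sf] smooth_dS[OF s1[of Tf]] smooth_dS[OF s1[of Zf1]] smooth_dS[OF s1[of Zf1b]] p
        in \<open>auto simp: W_def\<close>)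
  have "jet \<phi> (b, False # True # ds) = cder Zf1 (cder Zf1b ?f)"
    "jet \<phi> (b, True # False # ds) = cder Zf1b (cder Zf1 ?f)"
    by (simp_all add: jet_alt dsel_def)
  moreover have "\<i> * (cder Zf1 (cder Zf1b ?f) p - cder Zf1b (cder Zf1 ?f) p) = cder Tf ?f p"
    unfolding c by (simp flip: mult.assoc)
  ultimately show ?thesis by simp
qed



definition pj :: "(pt \<Rightarrow> complex) \<Rightarrow> jetvar list \<Rightarrow> pt \<Rightarrow> complex" where
  "pj \<phi> xs q = (\<Prod>v\<leftarrow>xs. jet \<phi> v q)"

lemma pj_Nil: "pj \<phi> [] = (\<lambda>q. 1)" by (simp add: pj_def[abs_def])
lemma pj_Cons: "pj \<phi> (v # vs) = (\<lambda>q. jet \<phi> v q * pj \<phi> vs q)" by (simp add: pj_def[abs_def])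
lemma pj_Cons': "pj \<phi> (v # vs) q = jet \<phi> v q * pj \<phi> vs q" by (simp add: pj_def)
lemma pj_append: "pj \<phi> (xs @ ys) q = pj \<phi> xs q * pj \<phi> ys q" by (simp add: pj_def)

lemma polyval_alt: "polyval P \<phi> p = (\<Sum>m\<leftarrow>P. fst m * pj \<phi> (snd m) p)"
  by (simp add: polyval_def pj_def)

lemma polyval_Nil: "polyval [] \<phi> = (\<lambda>q. 0)" by (simp add: polyval_def[abs_def])
lemma polyval_Cons: "polyval (m # P) \<phi> = (\<lambda>q. fst m * pj \<phi> (snd m) q + polyval P \<phi> q)"
  by (simp add: polyval_alt[abs_def])
lemma polyval_append: "polyval (P @ Q) \<phi> p = polyval P \<phi> p + polyval Q \<phi> p"
  by (simp add: polyval_alt)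

definition pmul :: "jetpoly \<Rightarrow> jetpoly \<Rightarrow> jetpoly" where
  "pmul P Q = concat (map (\<lambda>m. map (\<lambda>n. (fst m * fst n, snd m @ snd n)) Q) P)"

lemma polyval_pmul: "polyval (pmul P Q) \<phi> p = polyval P \<phi> p * polyval Q \<phi> p"
proof (induction P)
  case Nil then show ?case by (simp add: pmul_def polyval_alt)
next
  case (Cons m P)
  have "polyval (map (\<lambda>n. (fst m * fst n, snd m @ snd n)) Q) \<phi> p = fst m * pj \<phi> (snd m) p * polyval Q \<phi> p"
    by (induction Q) (simp_all add: polyval_alt pj_append algebra_simps)
  then show ?case using Cons by (simp add: pmul_def polyval_append[symmetric] polyval_alt algebra_simps)
qed

definition pscale :: "complex \<Rightarrow> jetpoly \<Rightarrow> jetpoly" where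
  "pscale c P = map (\<lambda>m. (c * fst m, snd m)) P"

lemma polyval_pscale: "polyval (pscale c P) \<phi> p = c * polyval P \<phi> p"
  by (induction P) (simp_all add: pscale_def polyval_alt algebra_simps)

definition pconst :: "complex \<Rightarrow> jetpoly" where "pconst c = [(c, [])]"

lemma polyval_pconst: "polyval (pconst c) \<phi> p = c"
  by (simp add: pconst_def polyval_alt pj_def)

definition pH :: jetpoly where "pH = [(1, []), (-1, [(False, []), (True, [])])]"

lemma cnorm_sq: "(complex_of_real (cmod z))\<^sup>2 = z * cnj z"
  by (metis complex_norm_square of_real_power)

lemma ht_pH: "ht \<phi> p = polyval pH \<phi> p"
  by (simp add: pH_def polyval_alt pj_def ht_def jet_def cnorm_sq)

lemma cder_const_dsel: "p \<in> S3 \<Longrightarrow> cder (dsel d) (\<lambda>q. c) p = 0"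
  using cder_const[of p "dsel d" c] dsel_tang by simp

lemma cder_const_T: "p \<in> S3 \<Longrightarrow> cder Tf (\<lambda>q. c) p = 0"
  using cder_const[of p Tf c] tang_Tf by simp

definition cv_jet :: "jetvar \<Rightarrow> jetvar" where "cv_jet v = (\<not> fst v, map Not (snd v))"

definition pconj :: "jetpoly \<Rightarrow> jetpoly" where
  "pconj P = map (\<lambda>m. (cnj (fst m), map cv_jet (snd m))) P"

lemma pj_cnj:
  assumes sm: "smoothS3 \<phi>" and q: "q \<in> S3"
  shows "cnj (pj \<phi> xs q) = pj \<phi> (map cv_jet xs) q"
  by (induction xs) (auto simp: pj_def cv_jet_def jet_cnj[OF sm q, symmetric] intro: jet_cnj[OF sm q])

lemma polyval_pconj:
  assumes sm: "smoothS3 \<phi>" and q: "q \<in> S3"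
  shows "cnj (polyval P \<phi> q) = polyval (pconj P) \<phi> q"
  by (induction P) (simp_all add: polyval_alt pconj_def pj_cnj[OF sm q, symmetric])

fun dmon :: "bool \<Rightarrow> jetvar list \<Rightarrow> jetvar list list" where
  "dmon d [] = []"
| "dmon d (v # vs) = ((fst v, d # snd v) # vs) # map ((#) v) (dmon d vs)"

definition pder :: "bool \<Rightarrow> jetpoly \<Rightarrow> jetpoly" where
  "pder d P = concat (map (\<lambda>m. map (\<lambda>ys. (fst m, ys)) (dmon d (snd m))) P)"

fun dmonT :: "jetvar list \<Rightarrow> (complex \<times> jetvar list) list" where
  "dmonT [] = []"
| "dmonT (v # vs) = [(\<i>, (fst v, False # True # snd v) # vs), (- \<i>, (fst v, True # False # snd v) # vs)]
     @ map (\<lambda>c. (fst c, v # snd c)) (dmonT vs)"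

definition pderT :: "jetpoly \<Rightarrow> jetpoly" where
  "pderT P = concat (map (\<lambda>m. map (\<lambda>c. (fst m * fst c, snd c)) (dmonT (snd m))) P)"

lemma dS_pj:
  assumes sm: "smoothS3 \<phi>" and p: "p \<in> S3"
  shows "dS (pj \<phi> xs) p"
proof (induction xs)
  case Nil then show ?case by (simp add: pj_Nil)
next
  case (Cons v vs)
  then show ?case using smooth_dS[OF smooth_jet[OF sm] p, of v] by (simp add: pj_Cons)
qed

lemma dS_polyval:
  assumes sm: "smoothS3 \<phi>" and p: "p \<in> S3"
  shows "dS (polyval P \<phi>) p"
proof (induction P)
  case Nil then show ?case by (simp add: polyval_Nil)
next
  case (Cons m P)
  then show ?case using dS_pj[OF sm p, of "snd m"] by (simp add: polyval_Cons)
qed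

lemma cder_pj:
  assumes sm: "smoothS3 \<phi>" and p: "p \<in> S3"
  shows "cder (dsel d) (pj \<phi> xs) p = (\<Sum>ys\<leftarrow>dmon d xs. pj \<phi> ys p)"
proof (induction xs)
  case Nil
  then show ?case by (simp add: pj_Nil cder_const_dsel[OF p])
next
  case (Cons v vs)
  obtain b ds where v: "v = (b, ds)" by (cases v)
  have "cder (dsel d) (pj \<phi> (v # vs)) p = jet \<phi> v p * cder (dsel d) (pj \<phi> vs) p + pj \<phi> vs p * cder (dsel d) (jet \<phi> v) p"
    unfolding pj_Cons
    by (rule cder_mult[of p "dsel d", OF p dsel_tang smooth_dS[OF smooth_jet[OF sm] p] dS_pj[OF sm p]])
  also have "\<dots> = (\<Sum>ys\<leftarrow>dmon d (v # vs). pj \<phi> ys p)"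
    using Cons by (simp add: v cder_jet pj_Cons' sum_list_const_mult[symmetric] o_def algebra_simps)
  finally show ?case .
qed

lemma cder_pjT:
  assumes sm: "smoothS3 \<phi>" and p: "p \<in> S3"
  shows "cder Tf (pj \<phi> xs) p = (\<Sum>c\<leftarrow>dmonT xs. fst c * pj \<phi> (snd c) p)"
proof (induction xs)
  case Nil
  then show ?case by (simp add: pj_Nil cder_const_T[OF p])
next
  case (Cons v vs)
  obtain b ds where v: "v = (b, ds)" by (cases v)
  have "cder Tf (pj \<phi> (v # vs)) p = jet \<phi> v p * cder Tf (pj \<phi> vs) p + pj \<phi> vs p * cder Tf (jet \<phi> v) p"
    unfolding pj_Cons
    by (rule cder_mult[of p Tf, OF p tang_Tf smooth_dS[OF smooth_jet[OF sm] p] dS_pj[OF sm p]])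
  also have "\<dots> = (\<Sum>c\<leftarrow>dmonT (v # vs). fst c * pj \<phi> (snd c) p)"
    using Cons by (simp add: v jet_T[OF sm p] pj_Cons' sum_list_const_mult[symmetric] o_def algebra_simps)
  finally show ?case .
qed

lemma cder_polyval:
  assumes sm: "smoothS3 \<phi>" and p: "p \<in> S3"
  shows "cder (dsel d) (polyval P \<phi>) p = polyval (pder d P) \<phi> p"
proof (induction P)
  case Nil then show ?case by (simp add: polyval_Nil pder_def polyval_alt cder_const_dsel[OF p])
next
  case (Cons m P)
  have "cder (dsel d) (polyval (m # P) \<phi>) p
      = cder (dsel d) (\<lambda>q. fst m * pj \<phi> (snd m) q) p + cder (dsel d) (polyval P \<phi>) p"
    unfolding polyval_Cons
    by (rule cder_add[of p "dsel d", OF p dsel_tang]) (use dS_pj[OF sm p] dS_polyval[OF sm p] in auto)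
  also have "cder (dsel d) (\<lambda>q. fst m * pj \<phi> (snd m) q) p = fst m * cder (dsel d) (pj \<phi> (snd m)) p"
    using cder_mult[of p "dsel d", OF p dsel_tang differentiable_const dS_pj[OF sm p], of "fst m" "snd m"]
      cder_const_dsel[OF p] by simp
  finally show ?case
    using Cons by (simp add: cder_pj[OF sm p] pder_def polyval_append polyval_alt sum_list_const_mult[symmetric] o_def)
qed

lemma cderT_polyval:
  assumes sm: "smoothS3 \<phi>" and p: "p \<in> S3"
  shows "cder Tf (polyval P \<phi>) p = polyval (pderT P) \<phi> p"
proof (induction P)
  case Nil then show ?case by (simp add: polyval_Nil pderT_def polyval_alt cder_const_T[OF p])
next
  case (Cons m P)
  have "cder Tf (polyval (m # P) \<phi>) p
      = cder Tf (\<lambda>q. fst m * pj \<phi> (snd m) q) p + cder Tf (polyval P \<phi>) p"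
    unfolding polyval_Cons
    by (rule cder_add[of p Tf, OF p tang_Tf]) (use dS_pj[OF sm p] dS_polyval[OF sm p] in auto)
  also have "cder Tf (\<lambda>q. fst m * pj \<phi> (snd m) q) p = fst m * cder Tf (pj \<phi> (snd m)) p"
    using cder_mult[of p Tf, OF p tang_Tf differentiable_const dS_pj[OF sm p], of "fst m" "snd m"]
      cder_const_T[OF p] by simp
  finally show ?case
    using Cons by (simp add: cder_pjT[OF sm p] pderT_def polyval_append polyval_alt sum_list_const_mult[symmetric] o_def mult.assoc)
qed



lemma mon_order_append: "mon_order (xs @ ys) = mon_order xs + mon_order ys"
  by (simp add: mon_order_def)

lemma mon_order_Cons: "mon_order (v # vs) = length (snd v) + mon_order vs"
  by (simp add: mon_order_def)

lemma mon_order_dmon: "ys \<in> set (dmon d xs) \<Longrightarrow> mon_order ys = mon_order xs + 1"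
  by (induction xs arbitrary: ys) (auto simp: mon_order_Cons)

lemma mon_order_dmonT: "c \<in> set (dmonT xs) \<Longrightarrow> mon_order (snd c) = mon_order xs + 2"
  by (induction xs arbitrary: c) (auto simp: mon_order_Cons)

lemma mon_order_cv: "mon_order (map cv_jet xs) = mon_order xs"
  by (induction xs) (auto simp: mon_order_Cons cv_jet_def)

definition ordP :: "nat \<Rightarrow> jetpoly \<Rightarrow> bool" where
  "ordP n P \<longleftrightarrow> (\<forall>m\<in>set P. mon_order (snd m) \<le> n)"

lemma ordP_append: "ordP n P \<Longrightarrow> ordP n Q \<Longrightarrow> ordP n (P @ Q)"
  by (auto simp: ordP_def)
lemma ordP_mono: "ordP n P \<Longrightarrow> n \<le> n' \<Longrightarrow> ordP n' P"
  by (auto simp: ordP_def)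
lemma ordP_pmul: "ordP n P \<Longrightarrow> ordP n' Q \<Longrightarrow> ordP (n + n') (pmul P Q)"
  by (fastforce simp: ordP_def pmul_def mon_order_append intro: add_mono)
lemma ordP_pscale: "ordP n P \<Longrightarrow> ordP n (pscale c P)"
  by (auto simp: ordP_def pscale_def)
lemma ordP_pconj: "ordP n P \<Longrightarrow> ordP n (pconj P)"
  by (auto simp: ordP_def pconj_def mon_order_cv)
lemma ordP_pder: "ordP n P \<Longrightarrow> ordP (n + 1) (pder d P)"
  by (auto simp: ordP_def pder_def mon_order_dmon)
lemma ordP_pderT: "ordP n P \<Longrightarrow> ordP (n + 2) (pderT P)"
  by (auto simp: ordP_def pderT_def mon_order_dmonT)
lemma ordP_pH: "ordP 0 pH"
  by (simp add: ordP_def pH_def mon_order_def)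
lemma ordP_pconst: "ordP 0 (pconst c)"
  by (simp add: ordP_def pconst_def mon_order_def)

definition good :: "(pt \<Rightarrow> complex) \<Rightarrow> bool" where
  "good \<phi> \<longleftrightarrow> smoothS3 \<phi> \<and> (\<forall>p\<in>S3. cmod (\<phi> p) < 1)"

lemma good_sm: "good \<phi> \<Longrightarrow> smoothS3 \<phi>" by (simp add: good_def)

lemma ht_nz: "good \<phi> \<Longrightarrow> p \<in> S3 \<Longrightarrow> ht \<phi> p \<noteq> 0"
proof -
  assume g: "good \<phi>" and p: "p \<in> S3"
  have "cmod (\<phi> p) < 1" using g p by (simp add: good_def)
  then have "(cmod (\<phi> p))\<^sup>2 < 1" by (simp add: power_less_one_iff abs_less_iff)
  then have "1 - (cmod (\<phi> p))\<^sup>2 \<noteq> 0" by linarith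
  then show "ht \<phi> p \<noteq> 0" by (simp only: ht_def of_real_eq_0_iff) simp
qed

lemma cnj_ht: "cnj (ht \<phi> p) = ht \<phi> p" by (simp add: ht_def)

definition Jx :: "nat \<Rightarrow> nat \<Rightarrow> ((pt \<Rightarrow> complex) \<Rightarrow> pt \<Rightarrow> complex) \<Rightarrow> bool" where
  "Jx n k F \<longleftrightarrow> (\<exists>P. ordP n P \<and> (\<forall>\<phi>. good \<phi> \<longrightarrow> (\<forall>p\<in>S3. F \<phi> p = polyval P \<phi> p / ht \<phi> p ^ k)))"

lemma JxI: "ordP n P \<Longrightarrow> (\<And>\<phi> p. good \<phi> \<Longrightarrow> p \<in> S3 \<Longrightarrow> F \<phi> p = polyval P \<phi> p / ht \<phi> p ^ k) \<Longrightarrow> Jx n k F"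
  unfolding Jx_def by blast

lemma JxE: "Jx n k F \<Longrightarrow> (\<And>P. ordP n P \<Longrightarrow> (\<And>\<phi> p. good \<phi> \<Longrightarrow> p \<in> S3 \<Longrightarrow> F \<phi> p = polyval P \<phi> p / ht \<phi> p ^ k) \<Longrightarrow> thesis) \<Longrightarrow> thesis"
  unfolding Jx_def by blast

lemma J_cong: "Jx n k F \<Longrightarrow> (\<And>\<phi> p. good \<phi> \<Longrightarrow> p \<in> S3 \<Longrightarrow> G \<phi> p = F \<phi> p) \<Longrightarrow> Jx n k G"
  by (auto elim!: JxE intro!: JxI)

lemma J_mono: "Jx n k F \<Longrightarrow> n \<le> n' \<Longrightarrow> Jx n' k F"
  by (auto elim!: JxE intro!: JxI intro: ordP_mono)

lemma J_raise1: "Jx n k F \<Longrightarrow> Jx n (Suc k) F"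
proof (erule JxE)
  fix P assume o: "ordP n P" and e: "\<And>\<phi> p. good \<phi> \<Longrightarrow> p \<in> S3 \<Longrightarrow> F \<phi> p = polyval P \<phi> p / ht \<phi> p ^ k"
  show "Jx n (Suc k) F"
  proof (rule JxI[of n "pmul P pH"])
    show "ordP n (pmul P pH)" using ordP_pmul[OF o ordP_pH] by simp
    fix \<phi> p assume g: "good \<phi>" and p: "p \<in> S3"
    show "F \<phi> p = polyval (pmul P pH) \<phi> p / ht \<phi> p ^ Suc k"
      using e[OF g p] ht_nz[OF g p] by (simp add: polyval_pmul ht_pH[symmetric])
  qed
qed

lemma J_raise: "Jx n k F \<Longrightarrow> k \<le> k' \<Longrightarrow> Jx n k' F"
proof (induction k' )
  case 0 then show ?case by simp
next
  case (Suc k')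
  then show ?case by (cases "k = Suc k'") (auto intro: J_raise1)
qed

lemma J_add: "Jx n k F \<Longrightarrow> Jx n k G \<Longrightarrow> Jx n k (\<lambda>\<phi> p. F \<phi> p + G \<phi> p)"
proof (erule JxE, erule JxE)
  fix P Q assume o1: "ordP n P" and e1: "\<And>\<phi> p. good \<phi> \<Longrightarrow> p \<in> S3 \<Longrightarrow> F \<phi> p = polyval P \<phi> p / ht \<phi> p ^ k"
    and o2: "ordP n Q" and e2: "\<And>\<phi> p. good \<phi> \<Longrightarrow> p \<in> S3 \<Longrightarrow> G \<phi> p = polyval Q \<phi> p / ht \<phi> p ^ k"
  show ?thesis
    by (rule JxI[of n "P @ Q"]) (auto simp: ordP_append o1 o2 e1 e2 polyval_append add_divide_distrib)
qed

lemma J_add': "Jx n1 k1 F \<Longrightarrow> Jx n2 k2 G \<Longrightarrow> Jx (max n1 n2) (max k1 k2) (\<lambda>\<phi> p. F \<phi> p + G \<phi> p)"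
  by (rule J_add; rule J_mono[OF J_raise]) auto

lemma J_scale: "Jx n k F \<Longrightarrow> Jx n k (\<lambda>\<phi> p. c * F \<phi> p)"
proof (erule JxE)
  fix P assume o: "ordP n P" and e: "\<And>\<phi> p. good \<phi> \<Longrightarrow> p \<in> S3 \<Longrightarrow> F \<phi> p = polyval P \<phi> p / ht \<phi> p ^ k"
  show ?thesis
    by (rule JxI[of n "pscale c P"]) (auto simp: ordP_pscale o e polyval_pscale)
qed

lemma J_neg: "Jx n k F \<Longrightarrow> Jx n k (\<lambda>\<phi> p. - F \<phi> p)"
  using J_scale[of n k F "-1"] by simp

lemma J_diff': "Jx n1 k1 F \<Longrightarrow> Jx n2 k2 G \<Longrightarrow> Jx (max n1 n2) (max k1 k2) (\<lambda>\<phi> p. F \<phi> p - G \<phi> p)"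
  using J_add'[of n1 k1 F n2 k2 "\<lambda>\<phi> p. - G \<phi> p"] J_neg by simp

lemma J_mult: "Jx n1 k1 F \<Longrightarrow> Jx n2 k2 G \<Longrightarrow> Jx (n1 + n2) (k1 + k2) (\<lambda>\<phi> p. F \<phi> p * G \<phi> p)"
proof (erule JxE, erule JxE)
  fix P Q assume o1: "ordP n1 P" and e1: "\<And>\<phi> p. good \<phi> \<Longrightarrow> p \<in> S3 \<Longrightarrow> F \<phi> p = polyval P \<phi> p / ht \<phi> p ^ k1"
    and o2: "ordP n2 Q" and e2: "\<And>\<phi> p. good \<phi> \<Longrightarrow> p \<in> S3 \<Longrightarrow> G \<phi> p = polyval Q \<phi> p / ht \<phi> p ^ k2"
  show ?thesis
    by (rule JxI[of _ "pmul P Q"]) (auto simp: ordP_pmul o1 o2 e1 e2 polyval_pmul power_add)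
qed

lemma J_const: "Jx 0 0 (\<lambda>\<phi> p. c)"
  by (rule JxI[of 0 "pconst c"]) (auto simp: ordP_pconst polyval_pconst)

lemma J_phi: "Jx 0 0 (\<lambda>\<phi> p. \<phi> p)"
  by (rule JxI[of 0 "[(1, [(False, [])])]"]) (auto simp: ordP_def mon_order_def polyval_alt pj_def jet_def)

lemma J_cphi: "Jx 0 0 (\<lambda>\<phi> p. cnj (\<phi> p))"
  by (rule JxI[of 0 "[(1, [(True, [])])]"]) (auto simp: ordP_def mon_order_def polyval_alt pj_def jet_def)

lemma J_ht: "Jx 0 0 ht"
  by (rule JxI[of 0 pH]) (auto simp: ordP_pH ht_pH)

lemma J_invht: "Jx 0 1 (\<lambda>\<phi> p. inverse (ht \<phi> p))"
  by (rule JxI[of 0 "pconst 1"]) (auto simp: ordP_pconst polyval_pconst divide_inverse)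

lemma J_cnj: "Jx n k F \<Longrightarrow> Jx n k (\<lambda>\<phi> p. cnj (F \<phi> p))"
proof (erule JxE)
  fix P assume o: "ordP n P" and e: "\<And>\<phi> p. good \<phi> \<Longrightarrow> p \<in> S3 \<Longrightarrow> F \<phi> p = polyval P \<phi> p / ht \<phi> p ^ k"
  show ?thesis
    by (rule JxI[of n "pconj P"]) (auto simp: ordP_pconj o e polyval_pconj[OF good_sm] cnj_ht)
qed

lemma J_dS:
  assumes J: "Jx n k F" and g: "good \<phi>" and p: "p \<in> S3"
  shows "dS (F \<phi>) p"
proof -
  obtain P where e: "\<And>\<phi> p. good \<phi> \<Longrightarrow> p \<in> S3 \<Longrightarrow> F \<phi> p = polyval P \<phi> p / ht \<phi> p ^ k"
    using J unfolding Jx_def by blast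
  have h: "ht \<phi> = polyval pH \<phi>" by (simp add: fun_eq_iff ht_pH)
  have "dS (\<lambda>q. polyval P \<phi> q / ht \<phi> q ^ k) p"
    unfolding h
    by (intro differentiable_divide differentiable_power dS_polyval[OF good_sm[OF g] p])
       (use ht_nz[OF g p] in \<open>simp add: h\<close>)
  then show ?thesis using diff_local[OF p, of "F \<phi>" "\<lambda>q. polyval P \<phi> q / ht \<phi> q ^ k"] e[OF g] by simp
qed

lemma cder_quot:
  assumes p: "p \<in> S3" and t: "tang p (X p)" and g: "dS g p" and h: "dS h p" and nz: "h p \<noteq> 0"
  shows "cder X (\<lambda>q. g q / h q ^ k) p = (h p * cder X g p - of_nat k * g p * cder X h p) / h p ^ (k + 1)"
proof -
  obtain Dg Dh where dg: "(g has_derivative Dg) (at p within S3)" and dh: "(h has_derivative Dh) (at p within S3)"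
    using g h by (auto simp: differentiable_def)
  have nzk: "h p ^ k \<noteq> 0" using nz by simp
  have d: "((\<lambda>q. g q / h q ^ k) has_derivative
     (\<lambda>y. - g p * (inverse (h p ^ k) * (of_nat k * Dh y * h p ^ (k - 1)) * inverse (h p ^ k)) + Dg y / h p ^ k))
     (at p within S3)"
    using has_derivative_divide[OF dg has_derivative_power[OF dh] nzk] .
  have e1: "cder X g p = Dg (re_vec (X p)) + \<i> * Dg (im_vec (X p))" using cder_eq[of p X, OF p t dg] by (simp add: cv_def)
  have e2: "cder X h p = Dh (re_vec (X p)) + \<i> * Dh (im_vec (X p))" using cder_eq[of p X, OF p t dh] by (simp add: cv_def)
  let ?r = "re_vec (X p)" and ?i = "im_vec (X p)"
  have c: "cder X (\<lambda>q. g q / h q ^ k) p =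
      (- g p * (inverse (h p ^ k) * (of_nat k * Dh ?r * h p ^ (k - 1)) * inverse (h p ^ k)) + Dg ?r / h p ^ k)
      + \<i> * (- g p * (inverse (h p ^ k) * (of_nat k * Dh ?i * h p ^ (k - 1)) * inverse (h p ^ k)) + Dg ?i / h p ^ k)"
    using cder_eq[of p X, OF p t d] by (simp add: cv_def)
  show ?thesis
  proof (cases k)
    case 0
    then show ?thesis unfolding c e1 e2 using nz by (simp add: field_simps)
  next
    case (Suc k')
    then show ?thesis unfolding c e1 e2 using nz by (simp add: field_simps)
  qed
qed

lemma ht_fun: "ht \<phi> = polyval pH \<phi>" by (simp add: fun_eq_iff ht_pH)

lemma J_dsel:
  assumes J: "Jx n k F"
  shows "Jx (n + 1) (k + 1) (\<lambda>\<phi> p. cder (dsel d) (F \<phi>) p)"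
proof -
  obtain P where o: "ordP n P" and e: "\<And>\<phi> p. good \<phi> \<Longrightarrow> p \<in> S3 \<Longrightarrow> F \<phi> p = polyval P \<phi> p / ht \<phi> p ^ k"
    using J unfolding Jx_def by blast
  show ?thesis
  proof (rule JxI[of _ "pmul pH (pder d P) @ pscale (- of_nat k) (pmul P (pder d pH))"])
    show "ordP (n + 1) (pmul pH (pder d P) @ pscale (- of_nat k) (pmul P (pder d pH)))"
      using ordP_pmul[OF ordP_pH ordP_pder[OF o, of d]] ordP_pmul[OF o ordP_pder[OF ordP_pH, of d]]
      by (auto intro!: ordP_append ordP_pscale)
    fix \<phi> p assume g: "good \<phi>" and p: "p \<in> S3"
    have sm: "smoothS3 \<phi>" using good_sm[OF g] .
    have "cder (dsel d) (F \<phi>) p = cder (dsel d) (\<lambda>q. polyval P \<phi> q / ht \<phi> q ^ k) p"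
      by (rule cder_local[OF p]) (simp add: e[OF g])
    also have "\<dots> = (ht \<phi> p * cder (dsel d) (polyval P \<phi>) p - of_nat k * polyval P \<phi> p * cder (dsel d) (ht \<phi>) p)
        / ht \<phi> p ^ (k + 1)"
      by (rule cder_quot[of p "dsel d", OF p dsel_tang dS_polyval[OF sm p]]) (use ht_nz[OF g p] dS_polyval[OF sm p] in \<open>simp_all add: ht_fun\<close>)
    also have "\<dots> = polyval (pmul pH (pder d P) @ pscale (- of_nat k) (pmul P (pder d pH))) \<phi> p / ht \<phi> p ^ (k + 1)"
      by (simp add: cder_polyval[OF sm p] polyval_append polyval_pscale polyval_pmul ht_fun)
    finally show "cder (dsel d) (F \<phi>) p = polyval (pmul pH (pder d P) @ pscale (- of_nat k) (pmul P (pder d pH))) \<phi> p / ht \<phi> p ^ (k + 1)" .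
  qed
qed

lemma J_T:
  assumes J: "Jx n k F"
  shows "Jx (n + 2) (k + 1) (\<lambda>\<phi> p. cder Tf (F \<phi>) p)"
proof -
  obtain P where o: "ordP n P" and e: "\<And>\<phi> p. good \<phi> \<Longrightarrow> p \<in> S3 \<Longrightarrow> F \<phi> p = polyval P \<phi> p / ht \<phi> p ^ k"
    using J unfolding Jx_def by blast
  show ?thesis
  proof (rule JxI[of _ "pmul pH (pderT P) @ pscale (- of_nat k) (pmul P (pderT pH))"])
    show "ordP (n + 2) (pmul pH (pderT P) @ pscale (- of_nat k) (pmul P (pderT pH)))"
      using ordP_pmul[OF ordP_pH ordP_pderT[OF o]] ordP_pmul[OF o ordP_pderT[OF ordP_pH]]
      by (auto intro!: ordP_append ordP_pscale)
    fix \<phi> p assume g: "good \<phi>" and p: "p \<in> S3"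
    have sm: "smoothS3 \<phi>" using good_sm[OF g] .
    have "cder Tf (F \<phi>) p = cder Tf (\<lambda>q. polyval P \<phi> q / ht \<phi> q ^ k) p"
      by (rule cder_local[OF p]) (simp add: e[OF g])
    also have "\<dots> = (ht \<phi> p * cder Tf (polyval P \<phi>) p - of_nat k * polyval P \<phi> p * cder Tf (ht \<phi>) p)
        / ht \<phi> p ^ (k + 1)"
      by (rule cder_quot[of p Tf, OF p tang_Tf dS_polyval[OF sm p]]) (use ht_nz[OF g p] dS_polyval[OF sm p] in \<open>simp_all add: ht_fun\<close>)
    also have "\<dots> = polyval (pmul pH (pderT P) @ pscale (- of_nat k) (pmul P (pderT pH))) \<phi> p / ht \<phi> p ^ (k + 1)"
      by (simp add: cderT_polyval[OF sm p] polyval_append polyval_pscale polyval_pmul ht_fun)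
    finally show "cder Tf (F \<phi>) p = polyval (pmul pH (pderT P) @ pscale (- of_nat k) (pmul P (pderT pH))) \<phi> p / ht \<phi> p ^ (k + 1)" .
  qed
qed

lemma J_Z: "Jx n k F \<Longrightarrow> Jx (n + 1) (k + 1) (\<lambda>\<phi> p. cder Zf1 (F \<phi>) p)"
  using J_dsel[of n k F False] by (simp add: dsel_def)

lemma J_Zb: "Jx n k F \<Longrightarrow> Jx (n + 1) (k + 1) (\<lambda>\<phi> p. cder Zf1b (F \<phi>) p)"
  using J_dsel[of n k F True] by (simp add: dsel_def)

lemma J_Zt:
  assumes J: "Jx n k F"
  shows "Jx (n + 1) (k + 1) (\<lambda>\<phi> p. cder (Zt \<phi>) (F \<phi>) p)"
proof -
  have "Jx (n + 1) (k + 1) (\<lambda>\<phi> p. cder Zf1 (F \<phi>) p + \<phi> p * cder Zf1b (F \<phi>) p)"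
    using J_add[OF J_Z[OF J] J_mult[OF J_phi J_Zb[OF J], unfolded add_0]] by simp
  then show ?thesis
    by (rule J_cong) (simp add: cder_Zt J_dS[OF J])
qed

lemma J_Ztb:
  assumes J: "Jx n k F"
  shows "Jx (n + 1) (k + 1) (\<lambda>\<phi> p. cder (Ztb \<phi>) (F \<phi>) p)"
proof -
  have "Jx (n + 1) (k + 1) (\<lambda>\<phi> p. cder Zf1b (F \<phi>) p + cnj (\<phi> p) * cder Zf1 (F \<phi>) p)"
    using J_add[OF J_Zb[OF J] J_mult[OF J_cphi J_Z[OF J], unfolded add_0]] by simp
  then show ?thesis
    by (rule J_cong) (simp add: cder_Ztb J_dS[OF J])
qed



definition fld :: "(pt \<Rightarrow> complex) \<Rightarrow> (pt \<Rightarrow> complex) \<Rightarrow> (pt \<Rightarrow> complex) \<Rightarrow> cvf" where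
  "fld a b c q = (a q * (\<i> * fst q) + b q * cnj (snd q) + c q * 0,
                  a q * (\<i> * snd q) + b q * (- cnj (fst q)) + c q * 0,
                  a q * (- \<i> * cnj (fst q)) + b q * 0 + c q * snd q,
                  a q * (- \<i> * cnj (snd q)) + b q * 0 + c q * (- fst q))"

lemma fld_qadd: "fld a b c p = qadd (qscale (a p) (Tf p)) (qadd (qscale (b p) (Zf1 p)) (qscale (c p) (Zf1b p)))"
  by (cases p) (simp add: fld_def qadd_def qscale_def Tf_def Zf1_def Zf1b_def)

lemma tang_fld: "tang p (fld a b c p)"
  by (simp add: fld_qadd tang_add tang_scale tang_Tf tang_Zf1 tang_Zf1b)

lemma Tf_fld: "Tf = fld (\<lambda>_. 1) (\<lambda>_. 0) (\<lambda>_. 0)"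
  by (rule ext, case_tac x) (simp add: fld_def Tf_def)

lemma Zt_fld: "Zt \<phi> = fld (\<lambda>_. 0) (\<lambda>_. 1) \<phi>"
  by (rule ext, case_tac x) (simp add: fld_def Zt_def qadd_def qscale_def Zf1_def Zf1b_def)

lemma Ztb_fld: "Ztb \<phi> = fld (\<lambda>_. 0) (\<lambda>q. cnj (\<phi> q)) (\<lambda>_. 1)"
  by (rule ext, case_tac x) (simp add: fld_def Ztb_def qadd_def qscale_def Zf1_def Zf1b_def)

lemma cder_fld:
  assumes p: "p \<in> S3" and f: "dS f p"
  shows "cder (fld a b c) f p = a p * cder Tf f p + b p * cder Zf1 f p + c p * cder Zf1b f p"
proof -
  obtain Df where df: "(f has_derivative Df) (at p within S3)"
    using f by (auto simp: differentiable_def)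
  have lin: "linear Df" using df by (rule has_derivative_linear)
  show ?thesis
    using cder_eq[of p "fld a b c", OF p tang_fld df] cder_eq[of p Tf, OF p tang_Tf df]
      cder_eq[of p Zf1, OF p tang_Zf1 df] cder_eq[of p Zf1b, OF p tang_Zf1b df]
    by (simp add: fld_qadd cv_add[OF lin] cv_scale[OF lin])
qed

lemma cder_coord:
  assumes p: "p \<in> S3" and t: "tang p (X p)"
  shows "cder X (\<lambda>q. fst q) p = fst (X p)" "cder X (\<lambda>q. snd q) p = fst (snd (X p))"
    "cder X (\<lambda>q. cnj (fst q)) p = fst (snd (snd (X p)))" "cder X (\<lambda>q. cnj (snd q)) p = snd (snd (snd (X p)))"
proof -
  obtain x1 x2 x3 x4 where X: "X p = (x1, x2, x3, x4)" by (cases "X p") auto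
  have d1: "((\<lambda>q. fst q) has_derivative (\<lambda>q. fst q)) (at p within S3)"
    by (rule has_derivative_fst[OF has_derivative_ident])
  have d2: "((\<lambda>q. snd q) has_derivative (\<lambda>q. snd q)) (at p within S3)"
    by (rule has_derivative_snd[OF has_derivative_ident])
  have d3: "((\<lambda>q. cnj (fst q)) has_derivative (\<lambda>q. cnj (fst q))) (at p within S3)"
    by (rule has_derivative_cnj[OF d1])
  have d4: "((\<lambda>q. cnj (snd q)) has_derivative (\<lambda>q. cnj (snd q))) (at p within S3)"
    by (rule has_derivative_cnj[OF d2])
  show "cder X (\<lambda>q. fst q) p = fst (X p)"
    using cder_eq[of p X, OF p t d1] X by (simp add: cv_def re_vec_def im_vec_def field_simps)
  show "cder X (\<lambda>q. snd q) p = fst (snd (X p))"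
    using cder_eq[of p X, OF p t d2] X by (simp add: cv_def re_vec_def im_vec_def field_simps)
  show "cder X (\<lambda>q. cnj (fst q)) p = fst (snd (snd (X p)))"
    using cder_eq[of p X, OF p t d3] X by (simp add: cv_def re_vec_def im_vec_def field_simps)
  show "cder X (\<lambda>q. cnj (snd q)) p = snd (snd (snd (X p)))"
    using cder_eq[of p X, OF p t d4] X by (simp add: cv_def re_vec_def im_vec_def field_simps)
qed

definition Lc :: "complex \<Rightarrow> complex \<Rightarrow> complex \<Rightarrow> complex \<Rightarrow> pt \<Rightarrow> complex" where
  "Lc k1 k2 k3 k4 q = k1 * fst q + k2 * snd q + k3 * cnj (fst q) + k4 * cnj (snd q)"

lemma Lc_bl: "bounded_linear (Lc k1 k2 k3 k4)"
proof -
  have "(Lc k1 k2 k3 k4 has_derivative Lc k1 k2 k3 k4) (at 0)"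
    unfolding Lc_def[abs_def]
    by (intro has_derivative_add has_derivative_mult_right has_derivative_fst has_derivative_snd
        has_derivative_cnj has_derivative_ident)
  then show ?thesis by (rule has_derivative_bounded_linear)
qed

lemma cv_Lc: "cv (Lc k1 k2 k3 k4) (x1, x2, x3, x4) = k1 * x1 + k2 * x2 + k3 * x3 + k4 * x4"
  by (simp add: cv_def Lc_def re_vec_def im_vec_def field_simps)

lemma cder_comp3:
  assumes p: "p \<in> S3" and t: "tang p (X p)" and a: "dS a p" and b: "dS b p" and c: "dS c p"
  shows "cder X (\<lambda>q. a q * Lc k1 k2 k3 k4 q + b q * Lc l1 l2 l3 l4 q + c q * Lc m1 m2 m3 m4 q) p
    = a p * cv (Lc k1 k2 k3 k4) (X p) + Lc k1 k2 k3 k4 p * cder X a p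
    + b p * cv (Lc l1 l2 l3 l4) (X p) + Lc l1 l2 l3 l4 p * cder X b p
    + c p * cv (Lc m1 m2 m3 m4) (X p) + Lc m1 m2 m3 m4 p * cder X c p"
proof -
  obtain Da Db Dc where da: "(a has_derivative Da) (at p within S3)" and db: "(b has_derivative Db) (at p within S3)"
    and dc: "(c has_derivative Dc) (at p within S3)"
    using a b c by (auto simp: differentiable_def)
  have L: "(Lc k l m n has_derivative Lc k l m n) (at p within S3)" for k l m n
    by (rule bounded_linear_imp_has_derivative[OF Lc_bl])
  have d: "((\<lambda>q. a q * Lc k1 k2 k3 k4 q + b q * Lc l1 l2 l3 l4 q + c q * Lc m1 m2 m3 m4 q) has_derivative
     (\<lambda>h. (a p * Lc k1 k2 k3 k4 h + Da h * Lc k1 k2 k3 k4 p) + (b p * Lc l1 l2 l3 l4 h + Db h * Lc l1 l2 l3 l4 p)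
        + (c p * Lc m1 m2 m3 m4 h + Dc h * Lc m1 m2 m3 m4 p))) (at p within S3)"
    by (intro has_derivative_add has_derivative_mult da db dc L)
  show ?thesis
    using cder_eq[of p X, OF p t d] cder_eq[of p X, OF p t da] cder_eq[of p X, OF p t db] cder_eq[of p X, OF p t dc]
    by (simp add: cv_def algebra_simps)
qed

lemma fld_comps:
  "(\<lambda>q. fst (fld a b c q)) = (\<lambda>q. a q * Lc \<i> 0 0 0 q + b q * Lc 0 0 0 1 q + c q * Lc 0 0 0 0 q)"
  "(\<lambda>q. fst (snd (fld a b c q))) = (\<lambda>q. a q * Lc 0 \<i> 0 0 q + b q * Lc 0 0 (-1) 0 q + c q * Lc 0 0 0 0 q)"
  "(\<lambda>q. fst (snd (snd (fld a b c q)))) = (\<lambda>q. a q * Lc 0 0 (- \<i>) 0 q + b q * Lc 0 0 0 0 q + c q * Lc 0 1 0 0 q)"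
  "(\<lambda>q. snd (snd (snd (fld a b c q)))) = (\<lambda>q. a q * Lc 0 0 0 (- \<i>) q + b q * Lc 0 0 0 0 q + c q * Lc (-1) 0 0 0 q)"
  by (simp_all add: fun_eq_iff fld_def Lc_def)

lemma fld_tuple: "fld a b c p = (a p * (\<i> * fst p) + b p * cnj (snd p),
                  a p * (\<i> * snd p) - b p * cnj (fst p),
                  - a p * \<i> * cnj (fst p) + c p * snd p,
                  - a p * \<i> * cnj (snd p) - c p * fst p)"
  by (simp add: fld_def)

lemma bracket_fld:
  assumes p: "p \<in> S3" and a: "dS a p" and b: "dS b p" and c: "dS c p"
    and a': "dS a' p" and b': "dS b' p" and c': "dS c' p"
  shows "bracket (fld a b c) (fld a' b' c') p =
    fld (\<lambda>_. cder (fld a b c) a' p - cder (fld a' b' c') a p - \<i> * (b p * c' p - c p * b' p))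
        (\<lambda>_. cder (fld a b c) b' p - cder (fld a' b' c') b p - 2 * \<i> * (a p * b' p - b p * a' p))
        (\<lambda>_. cder (fld a b c) c' p - cder (fld a' b' c') c p + 2 * \<i> * (a p * c' p - c p * a' p)) p"
proof -
  have e1: "cder (fld a b c) (\<lambda>q. fst (fld a' b' c' q)) p = a' p * cv (Lc \<i> 0 0 0) (fld a b c p) + Lc \<i> 0 0 0 p * cder (fld a b c) a' p
     + b' p * cv (Lc 0 0 0 1) (fld a b c p) + Lc 0 0 0 1 p * cder (fld a b c) b' p
     + c' p * cv (Lc 0 0 0 0) (fld a b c p) + Lc 0 0 0 0 p * cder (fld a b c) c' p"
    unfolding fld_comps by (rule cder_comp3[of p "fld a b c", OF p tang_fld a' b' c'])
  have f1: "cder (fld a' b' c') (\<lambda>q. fst (fld a b c q)) p = a p * cv (Lc \<i> 0 0 0) (fld a' b' c' p) + Lc \<i> 0 0 0 p * cder (fld a' b' c') a p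
     + b p * cv (Lc 0 0 0 1) (fld a' b' c' p) + Lc 0 0 0 1 p * cder (fld a' b' c') b p
     + c p * cv (Lc 0 0 0 0) (fld a' b' c' p) + Lc 0 0 0 0 p * cder (fld a' b' c') c p"
    unfolding fld_comps by (rule cder_comp3[of p "fld a' b' c'", OF p tang_fld a b c])
  have e2: "cder (fld a b c) (\<lambda>q. fst (snd (fld a' b' c' q))) p = a' p * cv (Lc 0 \<i> 0 0) (fld a b c p) + Lc 0 \<i> 0 0 p * cder (fld a b c) a' p
     + b' p * cv (Lc 0 0 (-1) 0) (fld a b c p) + Lc 0 0 (-1) 0 p * cder (fld a b c) b' p
     + c' p * cv (Lc 0 0 0 0) (fld a b c p) + Lc 0 0 0 0 p * cder (fld a b c) c' p"
    unfolding fld_comps by (rule cder_comp3[of p "fld a b c", OF p tang_fld a' b' c'])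
  have f2: "cder (fld a' b' c') (\<lambda>q. fst (snd (fld a b c q))) p = a p * cv (Lc 0 \<i> 0 0) (fld a' b' c' p) + Lc 0 \<i> 0 0 p * cder (fld a' b' c') a p
     + b p * cv (Lc 0 0 (-1) 0) (fld a' b' c' p) + Lc 0 0 (-1) 0 p * cder (fld a' b' c') b p
     + c p * cv (Lc 0 0 0 0) (fld a' b' c' p) + Lc 0 0 0 0 p * cder (fld a' b' c') c p"
    unfolding fld_comps by (rule cder_comp3[of p "fld a' b' c'", OF p tang_fld a b c])
  have e3: "cder (fld a b c) (\<lambda>q. fst (snd (snd (fld a' b' c' q)))) p = a' p * cv (Lc 0 0 (- \<i>) 0) (fld a b c p) + Lc 0 0 (- \<i>) 0 p * cder (fld a b c) a' p
     + b' p * cv (Lc 0 0 0 0) (fld a b c p) + Lc 0 0 0 0 p * cder (fld a b c) b' p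
     + c' p * cv (Lc 0 1 0 0) (fld a b c p) + Lc 0 1 0 0 p * cder (fld a b c) c' p"
    unfolding fld_comps by (rule cder_comp3[of p "fld a b c", OF p tang_fld a' b' c'])
  have f3: "cder (fld a' b' c') (\<lambda>q. fst (snd (snd (fld a b c q)))) p = a p * cv (Lc 0 0 (- \<i>) 0) (fld a' b' c' p) + Lc 0 0 (- \<i>) 0 p * cder (fld a' b' c') a p
     + b p * cv (Lc 0 0 0 0) (fld a' b' c' p) + Lc 0 0 0 0 p * cder (fld a' b' c') b p
     + c p * cv (Lc 0 1 0 0) (fld a' b' c' p) + Lc 0 1 0 0 p * cder (fld a' b' c') c p"
    unfolding fld_comps by (rule cder_comp3[of p "fld a' b' c'", OF p tang_fld a b c])
  have e4: "cder (fld a b c) (\<lambda>q. snd (snd (snd (fld a' b' c' q)))) p = a' p * cv (Lc 0 0 0 (- \<i>)) (fld a b c p) + Lc 0 0 0 (- \<i>) p * cder (fld a b c) a' p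
     + b' p * cv (Lc 0 0 0 0) (fld a b c p) + Lc 0 0 0 0 p * cder (fld a b c) b' p
     + c' p * cv (Lc (-1) 0 0 0) (fld a b c p) + Lc (-1) 0 0 0 p * cder (fld a b c) c' p"
    unfolding fld_comps by (rule cder_comp3[of p "fld a b c", OF p tang_fld a' b' c'])
  have f4: "cder (fld a' b' c') (\<lambda>q. snd (snd (snd (fld a b c q)))) p = a p * cv (Lc 0 0 0 (- \<i>)) (fld a' b' c' p) + Lc 0 0 0 (- \<i>) p * cder (fld a' b' c') a p
     + b p * cv (Lc 0 0 0 0) (fld a' b' c' p) + Lc 0 0 0 0 p * cder (fld a' b' c') b p
     + c p * cv (Lc (-1) 0 0 0) (fld a' b' c' p) + Lc (-1) 0 0 0 p * cder (fld a' b' c') c p"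
    unfolding fld_comps by (rule cder_comp3[of p "fld a' b' c'", OF p tang_fld a b c])
  show ?thesis
    unfolding bracket_def e1 f1 e2 f2 e3 f3 e4 f4
    unfolding fld_tuple cv_Lc
    by (simp add: Lc_def algebra_simps)
qed

lemma ht_alt: "ht \<phi> p = 1 - \<phi> p * cnj (\<phi> p)"
  by (simp add: ht_def cnorm_sq)

lemma S3_cnj: "p \<in> S3 \<Longrightarrow> fst p * cnj (fst p) + snd p * cnj (snd p) = 1"
proof -
  assume p: "p \<in> S3"
  obtain z w where pz: "p = (z, w)" by (cases p)
  have "(cmod z)\<^sup>2 + (cmod w)\<^sup>2 = 1" using p pz by (simp add: S3_def)
  then have "complex_of_real ((cmod z)\<^sup>2 + (cmod w)\<^sup>2) = 1" by simp
  then show ?thesis using pz by (simp add: cnorm_sq)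
qed

abbreviation fldv :: "pt \<Rightarrow> complex \<Rightarrow> complex \<Rightarrow> complex \<Rightarrow> cvec" where
  "fldv p \<alpha> \<beta> \<gamma> \<equiv> fld (\<lambda>_. \<alpha>) (\<lambda>_. \<beta>) (\<lambda>_. \<gamma>) p"

lemma fld_inv:
  assumes p: "p \<in> S3"
  shows "\<alpha> = - \<i> * (cnj (fst p) * fst (fldv p \<alpha> \<beta> \<gamma>) + cnj (snd p) * fst (snd (fldv p \<alpha> \<beta> \<gamma>)))"
    "\<beta> = snd p * fst (fldv p \<alpha> \<beta> \<gamma>) - fst p * fst (snd (fldv p \<alpha> \<beta> \<gamma>))"
    "\<gamma> = cnj (snd p) * fst (snd (snd (fldv p \<alpha> \<beta> \<gamma>))) - cnj (fst p) * snd (snd (snd (fldv p \<alpha> \<beta> \<gamma>)))"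
proof -
  obtain z w where pz: "p = (z, w)" by (cases p)
  have s: "z * cnj z + w * cnj w = 1" using S3_cnj[OF p] pz by simp
  have ii: "\<i> * \<i> = -1" by simp
  have e1: "cnj z * (\<alpha> * (\<i> * z) + \<beta> * cnj w) + cnj w * (\<alpha> * (\<i> * w) - \<beta> * cnj z) = \<i> * \<alpha> * (z * cnj z + w * cnj w)"
    by (simp add: algebra_simps)
  have e2: "w * (\<alpha> * (\<i> * z) + \<beta> * cnj w) - z * (\<alpha> * (\<i> * w) - \<beta> * cnj z) = \<beta> * (z * cnj z + w * cnj w)"
    by (simp add: algebra_simps)
  have e3: "cnj w * (- \<alpha> * \<i> * cnj z + \<gamma> * w) - cnj z * (- \<alpha> * \<i> * cnj w - \<gamma> * z) = \<gamma> * (z * cnj z + w * cnj w)"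
    by (simp add: algebra_simps)
  show "\<alpha> = - \<i> * (cnj (fst p) * fst (fldv p \<alpha> \<beta> \<gamma>) + cnj (snd p) * fst (snd (fldv p \<alpha> \<beta> \<gamma>)))"
    unfolding pz fld_tuple fst_conv snd_conv e1 s by simp
  show "\<beta> = snd p * fst (fldv p \<alpha> \<beta> \<gamma>) - fst p * fst (snd (fldv p \<alpha> \<beta> \<gamma>))"
    unfolding pz fld_tuple fst_conv snd_conv e2 s by simp
  show "\<gamma> = cnj (snd p) * fst (snd (snd (fldv p \<alpha> \<beta> \<gamma>))) - cnj (fst p) * snd (snd (snd (fldv p \<alpha> \<beta> \<gamma>)))"
    unfolding pz fld_tuple fst_conv snd_conv e3 s by simp
qed

lemma fld_inj:
  assumes p: "p \<in> S3" and e: "fldv p \<alpha> \<beta> \<gamma> = fldv p \<alpha>' \<beta>' \<gamma>'"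
  shows "\<alpha> = \<alpha>'" "\<beta> = \<beta>'" "\<gamma> = \<gamma>'"
proof -
  note A = fld_inv[OF p, where \<alpha>=\<alpha> and \<beta>=\<beta> and \<gamma>=\<gamma>]
  note B = fld_inv[OF p, where \<alpha>=\<alpha>' and \<beta>=\<beta>' and \<gamma>=\<gamma>']
  show "\<alpha> = \<alpha>'" using A(1) B(1) e by metis
  show "\<beta> = \<beta>'" using A(2) B(2) e by metis
  show "\<gamma> = \<gamma>'" using A(3) B(3) e by metis
qed

definition comb :: "(pt \<Rightarrow> complex) \<Rightarrow> pt \<Rightarrow> complex \<Rightarrow> complex \<Rightarrow> complex \<Rightarrow> cvec" where
  "comb \<phi> p c0 c1 c2 = qadd (qscale c0 (Tf p)) (qadd (qscale c1 (Zt \<phi> p)) (qscale c2 (Ztb \<phi> p)))"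

lemma comb_fld: "comb \<phi> p c0 c1 c2 = fldv p c0 (c1 + c2 * cnj (\<phi> p)) (c1 * \<phi> p + c2)"
  by (cases p) (simp add: comb_def fld_def qadd_def qscale_def Tf_def Zt_def Ztb_def Zf1_def Zf1b_def algebra_simps)

lemma frame_coeffs_comb:
  assumes p: "p \<in> S3" and h: "ht \<phi> p \<noteq> 0"
  shows "frame_coeffs \<phi> p (comb \<phi> p c0 c1 c2) = (c0, c1, c2)"
  unfolding frame_coeffs_def
proof (rule the_equality)
  show "case (c0, c1, c2) of (d0, d1, d2) \<Rightarrow> comb \<phi> p c0 c1 c2
       = qadd (qscale d0 (Tf p)) (qadd (qscale d1 (Zt \<phi> p)) (qscale d2 (Ztb \<phi> p)))"
    by (simp add: comb_def)
next
  fix x assume "case x of (d0, d1, d2) \<Rightarrow> comb \<phi> p c0 c1 c2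
       = qadd (qscale d0 (Tf p)) (qadd (qscale d1 (Zt \<phi> p)) (qscale d2 (Ztb \<phi> p)))"
  then obtain d0 d1 d2 where x: "x = (d0, d1, d2)" and e: "comb \<phi> p c0 c1 c2 = comb \<phi> p d0 d1 d2"
    by (cases x) (auto simp: comb_def)
  have i: "c0 = d0" "c1 + c2 * cnj (\<phi> p) = d1 + d2 * cnj (\<phi> p)" "c1 * \<phi> p + c2 = d1 * \<phi> p + d2"
    using fld_inj[OF p e[unfolded comb_fld]] by simp_all
  have h': "1 - \<phi> p * cnj (\<phi> p) \<noteq> 0" using h by (simp add: ht_alt)
  have "(c1 - d1) * (1 - \<phi> p * cnj (\<phi> p)) = 0" using i(2) i(3) by algebra
  then have "c1 = d1" using h' by simp
  moreover have "c2 = d2" using i(3) calculation by simp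
  ultimately show "x = (c0, c1, c2)" using x i(1) by simp
qed

lemma fldv_comb:
  assumes h: "ht \<phi> p \<noteq> 0"
  shows "fldv p \<alpha> \<beta> \<gamma> = comb \<phi> p \<alpha> ((\<beta> - cnj (\<phi> p) * \<gamma>) / ht \<phi> p) ((\<gamma> - \<phi> p * \<beta>) / ht \<phi> p)"
proof -
  have h': "1 - \<phi> p * cnj (\<phi> p) \<noteq> 0" using h by (simp add: ht_alt)
  have x1: "(\<beta> - cnj (\<phi> p) * \<gamma>) + (\<gamma> - \<phi> p * \<beta>) * cnj (\<phi> p) = \<beta> * ht \<phi> p"
    "(\<beta> - cnj (\<phi> p) * \<gamma>) * \<phi> p + (\<gamma> - \<phi> p * \<beta>) = \<gamma> * ht \<phi> p"
    by (simp_all add: ht_alt algebra_simps)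
  have "(\<beta> - cnj (\<phi> p) * \<gamma>) / ht \<phi> p + (\<gamma> - \<phi> p * \<beta>) / ht \<phi> p * cnj (\<phi> p) = \<beta>"
    "(\<beta> - cnj (\<phi> p) * \<gamma>) / ht \<phi> p * \<phi> p + (\<gamma> - \<phi> p * \<beta>) / ht \<phi> p = \<gamma>"
    using x1 h by (simp_all add: field_simps)
  then show ?thesis by (simp add: comb_fld)
qed

lemma frame_coeffs_fld:
  assumes p: "p \<in> S3" and h: "ht \<phi> p \<noteq> 0"
  shows "frame_coeffs \<phi> p (fldv p \<alpha> \<beta> \<gamma>) = (\<alpha>, (\<beta> - cnj (\<phi> p) * \<gamma>) / ht \<phi> p, (\<gamma> - \<phi> p * \<beta>) / ht \<phi> p)"
  using frame_coeffs_comb[OF p h] fldv_comb[OF h] by simp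

lemma theta_fld:
  assumes p: "p \<in> S3"
  shows "theta p (fldv p \<alpha> \<beta> \<gamma>) = \<alpha>"
proof -
  obtain z w where pz: "p = (z, w)" by (cases p)
  have th: "theta p v = - \<i> * (cnj (fst p) * fst v + cnj (snd p) * fst (snd v))" for v
    by (cases v) (simp add: theta_def pz)
  show ?thesis using fld_inv(1)[OF p, of \<alpha> \<beta> \<gamma>] th by simp
qed



lemma fld_at: "fld a b c q = fldv q (a q) (b q) (c q)"
  by (simp add: fld_def)

lemma Tf_v: "Tf p = fldv p 1 0 0" by (simp add: Tf_fld)
lemma Zt_v: "Zt \<phi> p = fldv p 0 1 (\<phi> p)" unfolding Zt_fld by (rule fld_at)
lemma Ztb_v: "Ztb \<phi> p = fldv p 0 (cnj (\<phi> p)) 1" unfolding Ztb_fld by (rule fld_at)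

definition neg4 :: "cvec \<Rightarrow> cvec" where "neg4 v = (case v of (a, b, c, d) \<Rightarrow> (-a, -b, -c, -d))"

lemma bracket_swap: "bracket Y X p = neg4 (bracket X Y p)"
  by (simp add: bracket_def neg4_def)

lemma bracket_self: "bracket X X p = fldv p 0 0 0"
  by (simp add: bracket_def fld_def)

lemma neg4_fld: "neg4 (fldv p \<alpha> \<beta> \<gamma>) = fldv p (-\<alpha>) (-\<beta>) (-\<gamma>)"
  by (simp add: neg4_def fld_def algebra_simps)

lemma qconj_fld: "qconj (fldv p \<alpha> \<beta> \<gamma>) = fldv p (cnj \<alpha>) (cnj \<gamma>) (cnj \<beta>)"
  by (cases p) (simp add: qconj_def fld_def)

context
  fixes \<phi> :: "pt \<Rightarrow> complex"
  assumes g: "good \<phi>"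
begin

lemma sm: "smoothS3 \<phi>" using good_sm[OF g] .
lemma dphi: "q \<in> S3 \<Longrightarrow> dS \<phi> q" using smooth_dS[OF sm] .
lemma dcphi: "q \<in> S3 \<Longrightarrow> dS (\<lambda>q. cnj (\<phi> q)) q" using smooth_dS[OF smooth_cnj[OF sm]] .
lemma hnz: "q \<in> S3 \<Longrightarrow> ht \<phi> q \<noteq> 0" using ht_nz[OF g] .
lemma dht: "q \<in> S3 \<Longrightarrow> dS (ht \<phi>) q" using dS_polyval[OF sm] by (simp add: ht_fun)

lemma fc_fld: "q \<in> S3 \<Longrightarrow> frame_coeffs \<phi> q (fldv q \<alpha> \<beta> \<gamma>) =
   (\<alpha>, (\<beta> - cnj (\<phi> q) * \<gamma>) / ht \<phi> q, (\<gamma> - \<phi> q * \<beta>) / ht \<phi> q)"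
  using frame_coeffs_fld[OF _ hnz] .

lemma fc_frame:
  assumes q: "q \<in> S3"
  shows "frame_coeffs \<phi> q (Tf q) = (1, 0, 0)" "frame_coeffs \<phi> q (Zt \<phi> q) = (0, 1, 0)"
    "frame_coeffs \<phi> q (Ztb \<phi> q) = (0, 0, 1)"
proof -
  have h: "ht \<phi> q \<noteq> 0" using hnz[OF q] .
  have h1: "(1 - cnj (\<phi> q) * \<phi> q) / ht \<phi> q = 1" using h by (simp add: ht_alt mult.commute)
  have h2: "(1 - \<phi> q * cnj (\<phi> q)) / ht \<phi> q = 1" using h by (simp add: ht_alt)
  show "frame_coeffs \<phi> q (Tf q) = (1, 0, 0)" by (simp add: Tf_v fc_fld[OF q])
  show "frame_coeffs \<phi> q (Zt \<phi> q) = (0, 1, 0)" by (simp add: Zt_v fc_fld[OF q] h1)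
  show "frame_coeffs \<phi> q (Ztb \<phi> q) = (0, 0, 1)" by (simp add: Ztb_v fc_fld[OF q] h2)
qed

lemma th1_frame:
  assumes q: "q \<in> S3"
  shows "th1 \<phi> q (Tf q) = 0" "th1 \<phi> q (Zt \<phi> q) = 1" "th1 \<phi> q (Ztb \<phi> q) = 0"
    "th1b \<phi> q (Tf q) = 0" "th1b \<phi> q (Zt \<phi> q) = 0" "th1b \<phi> q (Ztb \<phi> q) = 1"
  by (simp_all add: th1_def th1b_def fc_frame[OF q])

lemma theta_frame:
  assumes q: "q \<in> S3"
  shows "theta q (Tf q) = 1" "theta q (Zt \<phi> q) = 0" "theta q (Ztb \<phi> q) = 0"
  by (simp_all add: Tf_v Zt_v Ztb_v theta_fld[OF q])

lemma ff_frame: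
  assumes q: "q \<in> S3"
  shows "frame_form \<phi> q (w0, w1, w2) (Tf q) = w0" "frame_form \<phi> q (w0, w1, w2) (Zt \<phi> q) = w1"
    "frame_form \<phi> q (w0, w1, w2) (Ztb \<phi> q) = w2"
  by (simp_all add: frame_form_def fc_frame[OF q])

lemma th1_fld: "q \<in> S3 \<Longrightarrow> th1 \<phi> q (fldv q \<alpha> \<beta> \<gamma>) = (\<beta> - cnj (\<phi> q) * \<gamma>) / ht \<phi> q"
  by (simp add: th1_def fc_fld)

lemma ff_fld: "q \<in> S3 \<Longrightarrow> frame_form \<phi> q (w0, w1, w2) (fldv q \<alpha> \<beta> \<gamma>) =
   w0 * \<alpha> + w1 * ((\<beta> - cnj (\<phi> q) * \<gamma>) / ht \<phi> q) + w2 * ((\<gamma> - \<phi> q * \<beta>) / ht \<phi> q)"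
  by (simp add: frame_form_def fc_fld)

end


lemma cder_const_fld: "p \<in> S3 \<Longrightarrow> cder (fld a b c) (\<lambda>q. k) p = 0"
  using cder_const[of p "fld a b c" k] tang_fld by simp

definition w0f :: "(pt \<Rightarrow> complex) \<Rightarrow> pt \<Rightarrow> complex" where
  "w0f \<phi> p = th1 \<phi> p (bracket Tf (Zt \<phi>) p)"
definition Af :: "(pt \<Rightarrow> complex) \<Rightarrow> pt \<Rightarrow> complex" where
  "Af \<phi> p = - th1 \<phi> p (bracket Tf (Ztb \<phi>) p)"
definition w2f :: "(pt \<Rightarrow> complex) \<Rightarrow> pt \<Rightarrow> complex" where
  "w2f \<phi> p = - th1 \<phi> p (bracket (Zt \<phi>) (Ztb \<phi>) p)"
definition w1f :: "(pt \<Rightarrow> complex) \<Rightarrow> pt \<Rightarrow> complex" where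
  "w1f \<phi> p = cder (Zt \<phi>) (ht \<phi>) p / ht \<phi> p - cnj (w2f \<phi> p)"

context
  fixes \<phi> :: "pt \<Rightarrow> complex"
  assumes g: "good \<phi>"
begin

lemma br_TZ:
  assumes p: "p \<in> S3"
  shows "bracket Tf (Zt \<phi>) p = fldv p 0 (-2 * \<i>) (cder Tf \<phi> p + 2 * \<i> * \<phi> p)"
  unfolding Tf_fld Zt_fld
  by (subst bracket_fld[OF p]) (simp_all add: dphi[OF g p] cder_const_fld[OF p])

lemma br_TZb:
  assumes p: "p \<in> S3"
  shows "bracket Tf (Ztb \<phi>) p = fldv p 0 (cder Tf (\<lambda>q. cnj (\<phi> q)) p - 2 * \<i> * cnj (\<phi> p)) (2 * \<i>)"
  unfolding Tf_fld Ztb_fld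
  by (subst bracket_fld[OF p]) (simp_all add: dcphi[OF g p] cder_const_fld[OF p])

lemma br_ZZb:
  assumes p: "p \<in> S3"
  shows "bracket (Zt \<phi>) (Ztb \<phi>) p = fldv p (- \<i> * ht \<phi> p) (cder (Zt \<phi>) (\<lambda>q. cnj (\<phi> q)) p) (- cder (Ztb \<phi>) \<phi> p)"
  unfolding Zt_fld Ztb_fld
  by (subst bracket_fld[OF p]) (simp_all add: dphi[OF g p] dcphi[OF g p] cder_const_fld[OF p] ht_alt algebra_simps)

lemma tang_frame: "X \<in> set (frame \<phi>) \<Longrightarrow> tang p (X p)"
  by (auto simp: frame_def tang_Tf tang_Zt tang_Ztb)

lemma th1_const_frame:
  assumes Y: "Y \<in> set (frame \<phi>)"
  shows "\<exists>k. \<forall>q\<in>S3. th1 \<phi> q (Y q) = k"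
  using Y th1_frame[OF g] by (auto simp: frame_def)

lemma dth1:
  assumes p: "p \<in> S3" and X: "X \<in> set (frame \<phi>)" and Y: "Y \<in> set (frame \<phi>)"
  shows "dform1 (th1 \<phi>) X Y p = - th1 \<phi> p (bracket X Y p)"
proof -
  obtain k1 where k1: "\<forall>q\<in>S3. th1 \<phi> q (Y q) = k1" using th1_const_frame[OF Y] by blast
  obtain k2 where k2: "\<forall>q\<in>S3. th1 \<phi> q (X q) = k2" using th1_const_frame[OF X] by blast
  have "cder X (\<lambda>q. th1 \<phi> q (Y q)) p = cder X (\<lambda>q. k1) p" by (rule cder_local[OF p]) (use k1 in simp)
  also have "\<dots> = 0" using cder_const[of p X k1] p tang_frame[OF X] by simp
  finally have a: "cder X (\<lambda>q. th1 \<phi> q (Y q)) p = 0" .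
  have "cder Y (\<lambda>q. th1 \<phi> q (X q)) p = cder Y (\<lambda>q. k2) p" by (rule cder_local[OF p]) (use k2 in simp)
  also have "\<dots> = 0" using cder_const[of p Y k2] p tang_frame[OF Y] by simp
  finally have b: "cder Y (\<lambda>q. th1 \<phi> q (X q)) p = 0" .
  show ?thesis by (simp add: dform1_def a b)
qed

lemma th1_neg: "p \<in> S3 \<Longrightarrow> th1 \<phi> p (neg4 (fldv p \<alpha> \<beta> \<gamma>)) = - th1 \<phi> p (fldv p \<alpha> \<beta> \<gamma>)"
proof -
  assume p: "p \<in> S3"
  have "(- \<beta> - cnj (\<phi> p) * - \<gamma>) / ht \<phi> p = - ((\<beta> - cnj (\<phi> p) * \<gamma>) / ht \<phi> p)"
    by (simp add: diff_divide_distrib)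
  then show ?thesis by (simp only: neg4_fld th1_fld[OF g p])
qed

lemma th1_brackets:
  assumes p: "p \<in> S3"
  shows "th1 \<phi> p (bracket X X p) = 0"
    "th1 \<phi> p (bracket (Zt \<phi>) Tf p) = - w0f \<phi> p"
    "th1 \<phi> p (bracket (Ztb \<phi>) Tf p) = Af \<phi> p"
    "th1 \<phi> p (bracket (Ztb \<phi>) (Zt \<phi>) p) = w2f \<phi> p"
    "th1 \<phi> p (bracket Tf (Zt \<phi>) p) = w0f \<phi> p"
    "th1 \<phi> p (bracket Tf (Ztb \<phi>) p) = - Af \<phi> p"
    "th1 \<phi> p (bracket (Zt \<phi>) (Ztb \<phi>) p) = - w2f \<phi> p"
proof -
  show "th1 \<phi> p (bracket X X p) = 0" by (simp add: bracket_self th1_fld[OF g p])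
  show "th1 \<phi> p (bracket (Zt \<phi>) Tf p) = - w0f \<phi> p"
    by (simp only: bracket_swap[of "Zt \<phi>" Tf] br_TZ[OF p] th1_neg[OF p] w0f_def)
  show "th1 \<phi> p (bracket (Ztb \<phi>) Tf p) = Af \<phi> p"
    by (simp only: bracket_swap[of "Ztb \<phi>" Tf] br_TZb[OF p] th1_neg[OF p] Af_def)
  show "th1 \<phi> p (bracket (Ztb \<phi>) (Zt \<phi>) p) = w2f \<phi> p"
    by (simp only: bracket_swap[of "Ztb \<phi>" "Zt \<phi>"] br_ZZb[OF p] th1_neg[OF p] w2f_def)
  show "th1 \<phi> p (bracket Tf (Zt \<phi>) p) = w0f \<phi> p" by (simp only: w0f_def)
  show "th1 \<phi> p (bracket Tf (Ztb \<phi>) p) = - Af \<phi> p" by (simp add: Af_def)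
  show "th1 \<phi> p (bracket (Zt \<phi>) (Ztb \<phi>) p) = - w2f \<phi> p" by (simp add: w2f_def)
qed

lemma qconj_frame:
  "qconj (Tf p) = Tf p" "qconj (Zt \<phi> p) = Ztb \<phi> p" "qconj (Ztb \<phi> p) = Zt \<phi> p"
  by (simp_all add: Tf_v Zt_v Ztb_v qconj_fld)

lemma cder_T_cphi:
  assumes p: "p \<in> S3"
  shows "cder Tf (\<lambda>q. cnj (\<phi> q)) p = cnj (cder Tf \<phi> p)"
  by (rule cder_cnj[of p Tf, OF p tang_Tf dphi[OF g p]]) (simp add: qconj_frame)

lemma cder_T_ht:
  assumes p: "p \<in> S3"
  shows "cder Tf (ht \<phi>) p = - (\<phi> p * cnj (cder Tf \<phi> p) + cnj (\<phi> p) * cder Tf \<phi> p)"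
proof -
  have e: "ht \<phi> = (\<lambda>q. 1 - \<phi> q * cnj (\<phi> q))" by (simp add: fun_eq_iff ht_alt)
  have "cder Tf (\<lambda>q. 1 - \<phi> q * cnj (\<phi> q)) p = cder Tf (\<lambda>q. 1) p - cder Tf (\<lambda>q. \<phi> q * cnj (\<phi> q)) p"
    by (rule cder_diff[of p Tf, OF p tang_Tf]) (auto intro!: differentiable_mult dphi[OF g p] dcphi[OF g p])
  also have "\<dots> = - (\<phi> p * cder Tf (\<lambda>q. cnj (\<phi> q)) p + cnj (\<phi> p) * cder Tf \<phi> p)"
    using cder_const[of p Tf 1] cder_mult[of p Tf, OF p tang_Tf dphi[OF g p] dcphi[OF g p]] p tang_Tf by simp
  finally show ?thesis unfolding e cder_T_cphi[OF p] .
qed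

lemma w0_consistent:
  assumes p: "p \<in> S3"
  shows "w0f \<phi> p + cnj (w0f \<phi> p) = cder Tf (ht \<phi>) p / ht \<phi> p"
proof -
  have h: "ht \<phi> p \<noteq> 0" using hnz[OF g p] .
  have ch: "cnj (ht \<phi> p) = ht \<phi> p" by (rule cnj_ht)
  have w: "w0f \<phi> p = (-2 * \<i> - cnj (\<phi> p) * (cder Tf \<phi> p + 2 * \<i> * \<phi> p)) / ht \<phi> p"
    by (simp add: w0f_def br_TZ[OF p] th1_fld[OF g p])
  let ?T = "cder Tf \<phi> p" and ?f = "\<phi> p" and ?h = "ht \<phi> p"
  have cn: "cnj ((-2 * \<i> - cnj ?f * (?T + 2 * \<i> * ?f)) / ?h) = (2 * \<i> - ?f * (cnj ?T - 2 * \<i> * cnj ?f)) / ?h"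
    using ch by simp
  have num: "(-2 * \<i> - cnj ?f * (?T + 2 * \<i> * ?f)) + (2 * \<i> - ?f * (cnj ?T - 2 * \<i> * cnj ?f))
      = - (?f * cnj ?T + cnj ?f * ?T)"
    by (simp add: algebra_simps)
  show ?thesis unfolding w cder_T_ht[OF p] cn
    by (simp only: add_divide_distrib[symmetric] num)
qed

lemma cnj_Zt_ht:
  assumes p: "p \<in> S3"
  shows "cnj (cder (Zt \<phi>) (ht \<phi>) p) = cder (Ztb \<phi>) (ht \<phi>) p"
proof -
  have "cder (Ztb \<phi>) (\<lambda>q. cnj (ht \<phi> q)) p = cnj (cder (Zt \<phi>) (ht \<phi>) p)"
    by (rule cder_cnj[of p "Ztb \<phi>", OF p tang_Ztb dht[OF g p]]) (simp add: qconj_frame)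
  then show ?thesis by (simp add: cnj_ht)
qed

lemma tw_eq:
  assumes p: "p \<in> S3"
  shows "tw \<phi> p = ((w0f \<phi> p, w1f \<phi> p, w2f \<phi> p), Af \<phi> p)"
proof -
  have h: "ht \<phi> p \<noteq> 0" using hnz[OF g p] .
  have ch: "cnj (ht \<phi> p) = ht \<phi> p" by (rule cnj_ht)
  have fr: "set (frame \<phi>) = {Tf, Zt \<phi>, Ztb \<phi>}" by (simp add: frame_def)
  note simps = fr dth1[OF p] th1_brackets[OF p] th1_frame[OF g p] ff_frame[OF g p] theta_frame[OF g p]
    qconj_frame wedge_def
  show ?thesis
    unfolding tw_def
  proof (rule the_equality)
    show "case ((w0f \<phi> p, w1f \<phi> p, w2f \<phi> p), Af \<phi> p) of (wv, A) \<Rightarrow>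
      (\<forall>X\<in>set (frame \<phi>). \<forall>Y\<in>set (frame \<phi>).
         dform1 (th1 \<phi>) X Y p
           = wedge (th1 \<phi> p) (frame_form \<phi> p wv) (X p) (Y p)
             + A * wedge (theta p) (th1b \<phi> p) (X p) (Y p)) \<and>
      (\<forall>X\<in>set (frame \<phi>).
         frame_form \<phi> p wv (X p) + cnj (frame_form \<phi> p wv (qconj (X p)))
           = cder X (ht \<phi>) p / ht \<phi> p)"
      using w0_consistent[OF p] cnj_Zt_ht[OF p] h ch
      by (simp add: simps fr w1f_def)
  next
    fix x assume "case x of (wv, A) \<Rightarrow>
      (\<forall>X\<in>set (frame \<phi>). \<forall>Y\<in>set (frame \<phi>).
         dform1 (th1 \<phi>) X Y p
           = wedge (th1 \<phi> p) (frame_form \<phi> p wv) (X p) (Y p)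
             + A * wedge (theta p) (th1b \<phi> p) (X p) (Y p)) \<and>
      (\<forall>X\<in>set (frame \<phi>).
         frame_form \<phi> p wv (X p) + cnj (frame_form \<phi> p wv (qconj (X p)))
           = cder X (ht \<phi>) p / ht \<phi> p)"
    moreover obtain a b c A where x: "x = ((a, b, c), A)" by (cases x) auto
    ultimately have c1: "- w0f \<phi> p = - a" and c2: "- (- Af \<phi> p) = A" and c3: "- (- w2f \<phi> p) = c"
      and c4: "b + cnj c = cder (Zt \<phi>) (ht \<phi>) p / ht \<phi> p"
      by (simp_all add: simps)
    show "x = ((w0f \<phi> p, w1f \<phi> p, w2f \<phi> p), Af \<phi> p)"
      using c1 c2 c3 c4 x by (simp add: w1f_def algebra_simps)
  qed
qed

end


lemma J_dsel0:
  assumes J: "Jx n 0 F"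
  shows "Jx (n + 1) 0 (\<lambda>\<phi> p. cder (dsel d) (F \<phi>) p)"
proof -
  obtain P where o: "ordP n P" and e: "\<And>\<phi> p. good \<phi> \<Longrightarrow> p \<in> S3 \<Longrightarrow> F \<phi> p = polyval P \<phi> p / ht \<phi> p ^ 0"
    using J unfolding Jx_def by blast
  show ?thesis
  proof (rule JxI[of _ "pder d P"])
    show "ordP (n + 1) (pder d P)" using ordP_pder[OF o] .
    fix \<phi> p assume g: "good \<phi>" and p: "p \<in> S3"
    have "cder (dsel d) (F \<phi>) p = cder (dsel d) (polyval P \<phi>) p"
      by (rule cder_local[OF p]) (simp add: e[OF g])
    then show "cder (dsel d) (F \<phi>) p = polyval (pder d P) \<phi> p / ht \<phi> p ^ 0"
      by (simp add: cder_polyval[OF good_sm[OF g] p])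
  qed
qed

lemma J_T0:
  assumes J: "Jx n 0 F"
  shows "Jx (n + 2) 0 (\<lambda>\<phi> p. cder Tf (F \<phi>) p)"
proof -
  obtain P where o: "ordP n P" and e: "\<And>\<phi> p. good \<phi> \<Longrightarrow> p \<in> S3 \<Longrightarrow> F \<phi> p = polyval P \<phi> p / ht \<phi> p ^ 0"
    using J unfolding Jx_def by blast
  show ?thesis
  proof (rule JxI[of _ "pderT P"])
    show "ordP (n + 2) (pderT P)" using ordP_pderT[OF o] .
    fix \<phi> p assume g: "good \<phi>" and p: "p \<in> S3"
    have "cder Tf (F \<phi>) p = cder Tf (polyval P \<phi>) p"
      by (rule cder_local[OF p]) (simp add: e[OF g])
    then show "cder Tf (F \<phi>) p = polyval (pderT P) \<phi> p / ht \<phi> p ^ 0"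
      by (simp add: cderT_polyval[OF good_sm[OF g] p])
  qed
qed

lemma J_Z0: "Jx n 0 F \<Longrightarrow> Jx (n + 1) 0 (\<lambda>\<phi> p. cder Zf1 (F \<phi>) p)"
  using J_dsel0[of n F False] by (simp add: dsel_def)

lemma J_Zb0: "Jx n 0 F \<Longrightarrow> Jx (n + 1) 0 (\<lambda>\<phi> p. cder Zf1b (F \<phi>) p)"
  using J_dsel0[of n F True] by (simp add: dsel_def)

lemma J_Zt0:
  assumes J: "Jx n 0 F"
  shows "Jx (n + 1) 0 (\<lambda>\<phi> p. cder (Zt \<phi>) (F \<phi>) p)"
proof -
  have "Jx (n + 1) 0 (\<lambda>\<phi> p. cder Zf1 (F \<phi>) p + \<phi> p * cder Zf1b (F \<phi>) p)"
    using J_add[OF J_Z0[OF J] J_mult[OF J_phi J_Zb0[OF J], unfolded add_0]] by simp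
  then show ?thesis
    by (rule J_cong) (simp add: cder_Zt J_dS[OF J])
qed

lemma J_Ztb0:
  assumes J: "Jx n 0 F"
  shows "Jx (n + 1) 0 (\<lambda>\<phi> p. cder (Ztb \<phi>) (F \<phi>) p)"
proof -
  have "Jx (n + 1) 0 (\<lambda>\<phi> p. cder Zf1b (F \<phi>) p + cnj (\<phi> p) * cder Zf1 (F \<phi>) p)"
    using J_add[OF J_Zb0[OF J] J_mult[OF J_cphi J_Z0[OF J], unfolded add_0]] by simp
  then show ?thesis
    by (rule J_cong) (simp add: cder_Ztb J_dS[OF J])
qed

lemma J_div_ht: "Jx n k F \<Longrightarrow> Jx n (k + 1) (\<lambda>\<phi> p. F \<phi> p / ht \<phi> p)"
  using J_mult[OF _ J_invht, of n k F] by (simp add: divide_inverse)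

lemma J_up: "Jx n k F \<Longrightarrow> n \<le> n' \<Longrightarrow> k \<le> k' \<Longrightarrow> Jx n' k' F"
  using J_mono J_raise by blast

lemma J_up0: "Jx 0 0 F \<Longrightarrow> Jx n k F" using J_up by blast

lemma J_diff: "Jx n k F \<Longrightarrow> Jx n k G \<Longrightarrow> Jx n k (\<lambda>\<phi> p. F \<phi> p - G \<phi> p)"
  using J_add[of n k F "\<lambda>\<phi> p. - G \<phi> p"] J_neg by simp

lemma J_mult0: "Jx 0 0 F \<Longrightarrow> Jx n k G \<Longrightarrow> Jx n k (\<lambda>\<phi> p. F \<phi> p * G \<phi> p)"
  using J_mult[of 0 0 F n k G] by simp

lemma J_mult0': "Jx n k F \<Longrightarrow> Jx 0 0 G \<Longrightarrow> Jx n k (\<lambda>\<phi> p. F \<phi> p * G \<phi> p)"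
  using J_mult[of n k F 0 0 G] by simp

lemma J_divh: "Jx n k F \<Longrightarrow> Jx n (k + 1) (\<lambda>\<phi> p. F \<phi> p / ht \<phi> p)"
  by (rule J_div_ht)

lemma w0f_formula:
  assumes g: "good \<phi>" and p: "p \<in> S3"
  shows "w0f \<phi> p = (-2 * \<i> - cnj (\<phi> p) * (cder Tf \<phi> p + 2 * \<i> * \<phi> p)) / ht \<phi> p"
  by (simp add: w0f_def br_TZ[OF g p] th1_fld[OF g p])

lemma Af_formula:
  assumes g: "good \<phi>" and p: "p \<in> S3"
  shows "Af \<phi> p = - ((cder Tf (\<lambda>q. cnj (\<phi> q)) p - 2 * \<i> * cnj (\<phi> p) - cnj (\<phi> p) * (2 * \<i>)) / ht \<phi> p)"
  by (simp add: Af_def br_TZb[OF g p] th1_fld[OF g p])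

lemma w2f_formula:
  assumes g: "good \<phi>" and p: "p \<in> S3"
  shows "w2f \<phi> p = - ((cder (Zt \<phi>) (\<lambda>q. cnj (\<phi> q)) p - cnj (\<phi> p) * (- cder (Ztb \<phi>) \<phi> p)) / ht \<phi> p)"
  by (simp add: w2f_def br_ZZb[OF g p] th1_fld[OF g p])

lemma J_Tphi: "Jx 2 0 (\<lambda>\<phi> p. cder Tf \<phi> p)" using J_T0[OF J_phi] by (simp add: numeral_2_eq_2)
lemma J_Tcphi: "Jx 2 0 (\<lambda>\<phi> p. cder Tf (\<lambda>q. cnj (\<phi> q)) p)" using J_T0[OF J_cphi] by (simp add: numeral_2_eq_2)
lemma J_Ztphi: "Jx 1 0 (\<lambda>\<phi> p. cder (Zt \<phi>) \<phi> p)" using J_Zt0[OF J_phi] by simp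
lemma J_Ztcphi: "Jx 1 0 (\<lambda>\<phi> p. cder (Zt \<phi>) (\<lambda>q. cnj (\<phi> q)) p)" using J_Zt0[OF J_cphi] by simp
lemma J_Ztbphi: "Jx 1 0 (\<lambda>\<phi> p. cder (Ztb \<phi>) \<phi> p)" using J_Ztb0[OF J_phi] by simp
lemma J_Ztht: "Jx 1 0 (\<lambda>\<phi> p. cder (Zt \<phi>) (ht \<phi>) p)" using J_Zt0[OF J_ht] by simp

lemma J_w0f: "Jx 2 1 w0f"
proof -
  have "Jx 2 0 (\<lambda>\<phi> p. -2 * \<i> - cnj (\<phi> p) * (cder Tf \<phi> p + 2 * \<i> * \<phi> p))"
    by (rule J_diff[OF J_up0[OF J_const] J_mult0[OF J_cphi J_add[OF J_Tphi J_up0[OF J_mult0[OF J_const J_phi]]]]])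
  from J_divh[OF this, unfolded add_0] show ?thesis by (rule J_cong) (simp add: w0f_formula)
qed

lemma J_Af: "Jx 2 1 Af"
proof -
  have "Jx 2 0 (\<lambda>\<phi> p. cder Tf (\<lambda>q. cnj (\<phi> q)) p - 2 * \<i> * cnj (\<phi> p) - cnj (\<phi> p) * (2 * \<i>))"
    by (rule J_diff[OF J_diff[OF J_Tcphi J_up0[OF J_mult0[OF J_const J_cphi]]] J_up0[OF J_mult0[OF J_cphi J_const]]])
  from J_neg[OF J_divh[OF this, unfolded add_0]] show ?thesis by (rule J_cong) (simp add: Af_formula)
qed

lemma J_w2f: "Jx 1 1 w2f"
proof -
  have "Jx 1 0 (\<lambda>\<phi> p. cder (Zt \<phi>) (\<lambda>q. cnj (\<phi> q)) p - cnj (\<phi> p) * (- cder (Ztb \<phi>) \<phi> p))"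
    by (rule J_diff[OF J_Ztcphi J_mult0[OF J_cphi J_neg[OF J_Ztbphi]]])
  from J_neg[OF J_divh[OF this, unfolded add_0]] show ?thesis by (rule J_cong) (simp add: w2f_formula)
qed

lemma J_w1f: "Jx 1 1 w1f"
proof -
  have "Jx 1 1 (\<lambda>\<phi> p. cder (Zt \<phi>) (ht \<phi>) p / ht \<phi> p - cnj (w2f \<phi> p))"
    using J_diff[OF J_divh[OF J_Ztht, unfolded add_0] J_cnj[OF J_w2f]] by simp
  then show ?thesis by (rule J_cong) (simp add: w1f_def)
qed



context
  fixes \<phi> :: "pt \<Rightarrow> complex"
  assumes g: "good \<phi>"
begin

lemma omega_frame:
  assumes q: "q \<in> S3"
  shows "omega \<phi> q (Tf q) = w0f \<phi> q" "omega \<phi> q (Zt \<phi> q) = w1f \<phi> q" "omega \<phi> q (Ztb \<phi> q) = w2f \<phi> q"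
  by (simp_all add: omega_def tw_eq[OF g q] ff_frame[OF g q])

lemma omega_fld:
  assumes q: "q \<in> S3"
  shows "omega \<phi> q (fldv q \<alpha> \<beta> \<gamma>) = w0f \<phi> q * \<alpha> + w1f \<phi> q * ((\<beta> - cnj (\<phi> q) * \<gamma>) / ht \<phi> q)
       + w2f \<phi> q * ((\<gamma> - \<phi> q * \<beta>) / ht \<phi> q)"
  by (simp add: omega_def tw_eq[OF g q] ff_fld[OF g q])

lemma omega_neg:
  assumes q: "q \<in> S3"
  shows "omega \<phi> q (neg4 (fldv q \<alpha> \<beta> \<gamma>)) = - omega \<phi> q (fldv q \<alpha> \<beta> \<gamma>)"
proof -
  have "omega \<phi> q (neg4 (fldv q \<alpha> \<beta> \<gamma>)) = omega \<phi> q (fldv q (-\<alpha>) (-\<beta>) (-\<gamma>))" by (simp add: neg4_fld)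
  also have "\<dots> = - omega \<phi> q (fldv q \<alpha> \<beta> \<gamma>)"
    unfolding omega_fld[OF q] by (simp add: diff_divide_distrib algebra_simps)
  finally show ?thesis .
qed

lemma br_fld_ex:
  assumes p: "p \<in> S3" and X: "X \<in> set (frame \<phi>)" and Y: "Y \<in> set (frame \<phi>)"
  shows "\<exists>\<alpha> \<beta> \<gamma>. bracket X Y p = fldv p \<alpha> \<beta> \<gamma>"
proof -
  have sw: "\<exists>\<alpha> \<beta> \<gamma>. bracket Y X p = fldv p \<alpha> \<beta> \<gamma>" if "bracket X Y p = fldv p a b c" for X Y a b c
    using that by (auto simp: bracket_swap[of Y X] neg4_fld)
  have k: "\<exists>\<alpha> \<beta> \<gamma>. bracket Tf (Zt \<phi>) p = fldv p \<alpha> \<beta> \<gamma>" "\<exists>\<alpha> \<beta> \<gamma>. bracket Tf (Ztb \<phi>) p = fldv p \<alpha> \<beta> \<gamma>"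
     "\<exists>\<alpha> \<beta> \<gamma>. bracket (Zt \<phi>) (Ztb \<phi>) p = fldv p \<alpha> \<beta> \<gamma>"
    using br_TZ[OF g p] br_TZb[OF g p] br_ZZb[OF g p] by blast+
  show ?thesis using X Y k sw[of Tf "Zt \<phi>"] sw[of Tf "Ztb \<phi>"] sw[of "Zt \<phi>" "Ztb \<phi>"]
    by (auto simp: frame_def bracket_self) blast+
qed

lemma domega_antisym:
  assumes p: "p \<in> S3" and X: "X \<in> set (frame \<phi>)" and Y: "Y \<in> set (frame \<phi>)"
  shows "dform1 (omega \<phi>) Y X p = - dform1 (omega \<phi>) X Y p"
proof -
  obtain \<alpha> \<beta> \<gamma> where b: "bracket X Y p = fldv p \<alpha> \<beta> \<gamma>" using br_fld_ex[OF p X Y] by blast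
  have "omega \<phi> p (bracket Y X p) = - omega \<phi> p (bracket X Y p)"
    unfolding bracket_swap[of Y X] b by (rule omega_neg[OF p])
  then show ?thesis by (simp add: dform1_def)
qed

lemma domega_diag:
  assumes p: "p \<in> S3"
  shows "dform1 (omega \<phi>) X X p = 0"
  by (simp add: dform1_def bracket_self omega_fld[OF p])

definition "dw \<equiv> dform1 (omega \<phi>) (Zt \<phi>) (Ztb \<phi>)"

lemma scal_eq:
  assumes p: "p \<in> S3"
  shows "scal \<phi> p = dform1 (omega \<phi>) (Zt \<phi>) (Ztb \<phi>) p / ht \<phi> p"
proof -
  have h: "ht \<phi> p \<noteq> 0" using hnz[OF g p] .
  have fr: "set (frame \<phi>) = {Tf, Zt \<phi>, Ztb \<phi>}" by (simp add: frame_def)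
  have fm: "Tf \<in> set (frame \<phi>)" "Zt \<phi> \<in> set (frame \<phi>)" "Ztb \<phi> \<in> set (frame \<phi>)" by (simp_all add: frame_def)
  have as: "dform1 (omega \<phi>) (Zt \<phi>) Tf p = - dform1 (omega \<phi>) Tf (Zt \<phi>) p"
    "dform1 (omega \<phi>) (Ztb \<phi>) Tf p = - dform1 (omega \<phi>) Tf (Ztb \<phi>) p"
    "dform1 (omega \<phi>) (Ztb \<phi>) (Zt \<phi>) p = - dform1 (omega \<phi>) (Zt \<phi>) (Ztb \<phi>) p"
    using domega_antisym[OF p] fm by blast+
  note simps = fr as domega_diag[OF p] th1_frame[OF g p] theta_frame[OF g p] ff_frame[OF g p] wedge_def
  show ?thesis
    unfolding scal_def
  proof (rule the_equality)
    show "\<exists>bv. \<forall>X\<in>set (frame \<phi>). \<forall>Y\<in>set (frame \<phi>).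
      dform1 (omega \<phi>) X Y p - dform1 (omega \<phi>) (Zt \<phi>) (Ztb \<phi>) p / ht \<phi> p * ht \<phi> p * wedge (th1 \<phi> p) (th1b \<phi> p) (X p) (Y p)
        = wedge (theta p) (frame_form \<phi> p bv) (X p) (Y p)"
      by (rule exI[of _ "(0, dform1 (omega \<phi>) Tf (Zt \<phi>) p, dform1 (omega \<phi>) Tf (Ztb \<phi>) p)"])
         (use h in \<open>simp add: simps\<close>)
  next
    fix r assume "\<exists>bv. \<forall>X\<in>set (frame \<phi>). \<forall>Y\<in>set (frame \<phi>).
      dform1 (omega \<phi>) X Y p - r * ht \<phi> p * wedge (th1 \<phi> p) (th1b \<phi> p) (X p) (Y p)
        = wedge (theta p) (frame_form \<phi> p bv) (X p) (Y p)"
    then obtain bv where bv: "dform1 (omega \<phi>) (Zt \<phi>) (Ztb \<phi>) p - r * ht \<phi> p * wedge (th1 \<phi> p) (th1b \<phi> p) (Zt \<phi> p) (Ztb \<phi> p)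
        = wedge (theta p) (frame_form \<phi> p bv) (Zt \<phi> p) (Ztb \<phi> p)" using fm by blast
    then have "dform1 (omega \<phi>) (Zt \<phi>) (Ztb \<phi>) p = r * ht \<phi> p"
      by (simp add: th1_frame[OF g p] theta_frame[OF g p] wedge_def)
    then show "r = dform1 (omega \<phi>) (Zt \<phi>) (Ztb \<phi>) p / ht \<phi> p" using h by simp
  qed
qed

lemma scal_formula:
  assumes p: "p \<in> S3"
  shows "scal \<phi> p = (cder (Zt \<phi>) (w2f \<phi>) p - cder (Ztb \<phi>) (w1f \<phi>) p
     - (w0f \<phi> p * (- \<i> * ht \<phi> p)
        + w1f \<phi> p * ((cder (Zt \<phi>) (\<lambda>q. cnj (\<phi> q)) p - cnj (\<phi> p) * (- cder (Ztb \<phi>) \<phi> p)) / ht \<phi> p)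
        + w2f \<phi> p * ((- cder (Ztb \<phi>) \<phi> p - \<phi> p * cder (Zt \<phi>) (\<lambda>q. cnj (\<phi> q)) p) / ht \<phi> p))) / ht \<phi> p"
proof -
  have a: "cder (Zt \<phi>) (\<lambda>q. omega \<phi> q (Ztb \<phi> q)) p = cder (Zt \<phi>) (w2f \<phi>) p"
    by (rule cder_local[OF p]) (simp add: omega_frame)
  have b: "cder (Ztb \<phi>) (\<lambda>q. omega \<phi> q (Zt \<phi> q)) p = cder (Ztb \<phi>) (w1f \<phi>) p"
    by (rule cder_local[OF p]) (simp add: omega_frame)
  show ?thesis
    unfolding scal_eq[OF p] dform1_def a b br_ZZb[OF g p] omega_fld[OF p] ..
qed

end

lemma J_scal: "Jx 2 3 scal"
proof -
  have c1: "Jx 1 1 (\<lambda>\<phi> p. (cder (Zt \<phi>) (\<lambda>q. cnj (\<phi> q)) p - cnj (\<phi> p) * (- cder (Ztb \<phi>) \<phi> p)) / ht \<phi> p)"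
    using J_divh[OF J_diff[OF J_Ztcphi J_mult0[OF J_cphi J_neg[OF J_Ztbphi]]], unfolded add_0] .
  have c2: "Jx 1 1 (\<lambda>\<phi> p. (- cder (Ztb \<phi>) \<phi> p - \<phi> p * cder (Zt \<phi>) (\<lambda>q. cnj (\<phi> q)) p) / ht \<phi> p)"
    using J_divh[OF J_diff[OF J_neg[OF J_Ztbphi] J_mult0[OF J_phi J_Ztcphi]], unfolded add_0] .
  have t1: "Jx 2 2 (\<lambda>\<phi> p. cder (Zt \<phi>) (w2f \<phi>) p)" using J_Zt[OF J_w2f] by (simp add: numeral_2_eq_2)
  have t2: "Jx 2 2 (\<lambda>\<phi> p. cder (Ztb \<phi>) (w1f \<phi>) p)" using J_Ztb[OF J_w1f] by (simp add: numeral_2_eq_2)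
  have t3: "Jx 2 2 (\<lambda>\<phi> p. w0f \<phi> p * (- \<i> * ht \<phi> p))"
    using J_up[OF J_mult0'[OF J_w0f J_mult0[OF J_const[of "- \<i>"] J_ht]], of 2 2] by simp
  have t4: "Jx 2 2 (\<lambda>\<phi> p. w1f \<phi> p * ((cder (Zt \<phi>) (\<lambda>q. cnj (\<phi> q)) p - cnj (\<phi> p) * (- cder (Ztb \<phi>) \<phi> p)) / ht \<phi> p))"
    using J_mult[OF J_w1f c1] by (simp add: numeral_2_eq_2)
  have t5: "Jx 2 2 (\<lambda>\<phi> p. w2f \<phi> p * ((- cder (Ztb \<phi>) \<phi> p - \<phi> p * cder (Zt \<phi>) (\<lambda>q. cnj (\<phi> q)) p) / ht \<phi> p))"
    using J_mult[OF J_w2f c2] by (simp add: numeral_2_eq_2)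
  have "Jx 2 3 (\<lambda>\<phi> p. (cder (Zt \<phi>) (w2f \<phi>) p - cder (Ztb \<phi>) (w1f \<phi>) p
     - (w0f \<phi> p * (- \<i> * ht \<phi> p)
        + w1f \<phi> p * ((cder (Zt \<phi>) (\<lambda>q. cnj (\<phi> q)) p - cnj (\<phi> p) * (- cder (Ztb \<phi>) \<phi> p)) / ht \<phi> p)
        + w2f \<phi> p * ((- cder (Ztb \<phi>) \<phi> p - \<phi> p * cder (Zt \<phi>) (\<lambda>q. cnj (\<phi> q)) p) / ht \<phi> p))) / ht \<phi> p)"
    using J_divh[OF J_diff[OF J_diff[OF t1 t2] J_add[OF J_add[OF t3 t4] t5]]] by (simp add: numeral_3_eq_3)
  then show ?thesis by (rule J_cong) (simp add: scal_formula)
qed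



lemma J_cov_Zt:
  assumes J: "Jx n k F"
  shows "Jx (Suc n) (Suc k) (\<lambda>\<phi> p. cov \<phi> m 0 (Zt \<phi>) (F \<phi>) p)"
proof -
  have "Jx (Suc n) (Suc k) (\<lambda>\<phi> p. cder (Zt \<phi>) (F \<phi>) p - of_int m * w1f \<phi> p * F \<phi> p)"
    using J_diff[OF J_Zt[OF J] J_mult[OF J_mult0[OF J_const J_w1f] J, unfolded add.commute[of 1]]] by simp
  then show ?thesis by (rule J_cong) (simp add: cov_def omega_frame)
qed

lemma J_cov_Ztb:
  assumes J: "Jx n k F"
  shows "Jx (Suc n) (Suc k) (\<lambda>\<phi> p. cov \<phi> m 0 (Ztb \<phi>) (F \<phi>) p)"
proof -
  have "Jx (Suc n) (Suc k) (\<lambda>\<phi> p. cder (Ztb \<phi>) (F \<phi>) p - of_int m * w2f \<phi> p * F \<phi> p)"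
    using J_diff[OF J_Ztb[OF J] J_mult[OF J_mult0[OF J_const J_w2f] J, unfolded add.commute[of 1]]] by simp
  then show ?thesis by (rule J_cong) (simp add: cov_def omega_frame)
qed

lemma J_cov_T:
  assumes J: "Jx n k F"
  shows "Jx (Suc (Suc n)) (Suc k) (\<lambda>\<phi> p. cov \<phi> m 0 Tf (F \<phi>) p)"
proof -
  have "Jx (Suc (Suc n)) (Suc k) (\<lambda>\<phi> p. cder Tf (F \<phi>) p - of_int m * w0f \<phi> p * F \<phi> p)"
    using J_diff[OF J_T[OF J] J_mult[OF J_mult0[OF J_const J_w0f] J, unfolded add.commute[of 1] add.commute[of 2]]] by (simp add: numeral_2_eq_2)
  then show ?thesis by (rule J_cong) (simp add: cov_def omega_frame)
qed

lemma J_A11: "Jx 2 1 A11"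
proof -
  have "Jx 2 1 (\<lambda>\<phi> p. cnj (ht \<phi> p * Af \<phi> p))"
    by (rule J_cnj[OF J_mult0[OF J_ht J_Af]])
  then show ?thesis by (rule J_cong) (simp add: A11_def Abb_def torsion_def tw_eq)
qed

lemma J_Aup: "Jx 2 3 Aup"
proof -
  have "Jx 2 3 (\<lambda>\<phi> p. inverse (ht \<phi> p) * inverse (ht \<phi> p) * (ht \<phi> p * Af \<phi> p))"
    using J_mult[OF J_mult[OF J_invht J_invht] J_mult0[OF J_ht J_Af]] by (simp add: numeral_3_eq_3 numeral_2_eq_2)
  then show ?thesis by (rule J_cong) (simp add: Aup_def Abb_def torsion_def tw_eq)
qed

lemma J_inv_mult: "Jx n k F \<Longrightarrow> Jx n (Suc k) (\<lambda>\<phi> p. inverse (ht \<phi> p) * F \<phi> p)"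
  using J_mult[OF J_invht] by simp

lemma J_Q11: "Jx 4 5 Q11"
proof -
  have S1: "Jx 3 4 (\<lambda>\<phi> p. cov \<phi> 0 0 (Zt \<phi>) (scal \<phi>) p)"
    using J_cov_Zt[OF J_scal] by (simp add: numeral_3_eq_3 numeral_eq_Suc)
  have S2: "Jx 4 5 (\<lambda>\<phi> p. cov \<phi> 1 0 (Zt \<phi>) (\<lambda>q. cov \<phi> 0 0 (Zt \<phi>) (scal \<phi>) q) p)"
    using J_cov_Zt[OF S1] by (simp add: numeral_eq_Suc)
  have RA: "Jx 4 5 (\<lambda>\<phi> p. scal \<phi> p * A11 \<phi> p)"
    using J_up[OF J_mult[OF J_scal J_A11], of 4 5] by simp
  have TA: "Jx 4 5 (\<lambda>\<phi> p. cov \<phi> 2 0 Tf (A11 \<phi>) p)"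
    using J_up[OF J_cov_T[OF J_A11], of 4 5] by (simp add: numeral_eq_Suc)
  have Ai: "Jx 3 3 (\<lambda>\<phi> q. inverse (ht \<phi> q) * cov \<phi> 2 0 (Ztb \<phi>) (A11 \<phi>) q)"
    using J_inv_mult[OF J_cov_Ztb[OF J_A11]] by (simp add: numeral_eq_Suc)
  have ZAi: "Jx 4 5 (\<lambda>\<phi> p. cov \<phi> 1 0 (Zt \<phi>) (\<lambda>q. inverse (ht \<phi> q) * cov \<phi> 2 0 (Ztb \<phi>) (A11 \<phi>) q) p)"
    using J_up[OF J_cov_Zt[OF Ai], of 4 5] by (simp add: numeral_eq_Suc)
  have "Jx 4 5 (\<lambda>\<phi> p. - (1/6) * cov \<phi> 1 0 (Zt \<phi>) (cov \<phi> 0 0 (Zt \<phi>) (scal \<phi>)) p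
     - (\<i>/2) * scal \<phi> p * A11 \<phi> p
     + cov \<phi> 2 0 Tf (A11 \<phi>) p
     + (2*\<i>/3) * cov \<phi> 1 0 (Zt \<phi>)
                   (\<lambda>q. inverse (ht \<phi> q) * cov \<phi> 2 0 (Ztb \<phi>) (A11 \<phi>) q) p)"
    using J_add[OF J_add[OF J_diff[OF J_mult0[OF J_const[of "- (1/6)"] S2] J_mult0[OF J_const[of "\<i>/2"] RA]] TA] J_mult0[OF J_const[of "2*\<i>/3"] ZAi]]
    by (simp add: mult.assoc)
  then show ?thesis by (rule J_cong) (simp add: Q11_def)
qed

lemma J_obstruction: "Jx 6 9 obstruction"
proof -
  have a: "Jx 5 6 (\<lambda>\<phi> q. cov \<phi> 2 0 (Ztb \<phi>) (Q11 \<phi>) q)"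
    using J_cov_Ztb[OF J_Q11] by (simp add: numeral_eq_Suc)
  have b: "Jx 5 7 (\<lambda>\<phi> q. inverse (ht \<phi> q) * cov \<phi> 2 0 (Ztb \<phi>) (Q11 \<phi>) q)"
    using J_inv_mult[OF a] by (simp add: numeral_eq_Suc)
  have c: "Jx 6 8 (\<lambda>\<phi> p. cov \<phi> 1 0 (Ztb \<phi>) (\<lambda>q. inverse (ht \<phi> q) * cov \<phi> 2 0 (Ztb \<phi>) (Q11 \<phi>) q) p)"
    using J_cov_Ztb[OF b] by (simp add: numeral_eq_Suc)
  have d: "Jx 6 9 (\<lambda>\<phi> p. inverse (ht \<phi> p) * cov \<phi> 1 0 (Ztb \<phi>) (\<lambda>q. inverse (ht \<phi> q) * cov \<phi> 2 0 (Ztb \<phi>) (Q11 \<phi>) q) p)"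
    using J_inv_mult[OF c] by (simp add: numeral_eq_Suc)
  have e: "Jx 6 9 (\<lambda>\<phi> p. \<i> * Aup \<phi> p * Q11 \<phi> p)"
    using J_up[OF J_mult[OF J_mult0[OF J_const[of \<i>] J_Aup] J_Q11], of 6 9] by simp
  have "Jx 6 9 (\<lambda>\<phi> p. (1/3) *
     (inverse (ht \<phi> p) * cov \<phi> 1 0 (Ztb \<phi>)
        (\<lambda>q. inverse (ht \<phi> q) * cov \<phi> 2 0 (Ztb \<phi>) (Q11 \<phi>) q) p
      - \<i> * Aup \<phi> p * Q11 \<phi> p))"
    by (rule J_mult0[OF J_const[of "1/3"] J_diff[OF d e]])
  then show ?thesis by (rule J_cong) (simp add: obstruction_def)
qed

theorem lemma4p4:
  "\<exists>P :: jetpoly. (\<forall>m\<in>set P. mon_order (snd m) \<le> 6) \<and>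
     (\<forall>\<phi>. smoothS3 \<phi> \<and> (\<forall>p\<in>S3. cmod (\<phi> p) < 1) \<longrightarrow>
        (\<forall>p\<in>S3. obstruction \<phi> p
                   = polyval P \<phi> p / (complex_of_real (1 - (cmod (\<phi> p))\<^sup>2)) ^ 9))"
  using J_obstruction unfolding Jx_def ordP_def good_def ht_def by blast



end
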